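(* Let $\mathbb{F}$ be a field of characteristic $0$, $p,q>1$ integers with $p\neq q$, and $\mathcal{J}_{\mathbb{F}}$ the Jordan triple system of all $p\times q$ matrices over $\mathbb{F}$ with triple product $\{x,y,z\}=xy^tz+zy^tx$. Then the universal associative envelope $\mathcal{U}(\mathcal{J}_{\mathbb{F}})$ is semisimple.
   Context: Put $\Omega_1=\{1,\dots,p\}$, $\Omega_2=\{1,\dots,q\}$, and let $E_{i,j}$ be the standard matrix units of $M_{p\times q}(\mathbb{F})$. Let $\mathfrak{F}$ be the free associative algebra (without identity element) over $\mathbb{F}$ on symbols $G_{i,j}$ ($i\in\Omega_1$, $j\in\Omega_2$), and $\Phi:\mathcal{J}_{\mathbb{F}}\to\mathfrak{F}$ the linear map with $\Phi(E_{i,j})=G_{i,j}$. Let $I$ be the two-sided ideal generated by all $G_{i,j}G_{k,\ell}G_{s,t}+G_{s,t}G_{k,\ell}G_{i,j}-\Phi(\{E_{i,j},E_{k,\ell},E_{s,t}\})$. The universal associative envelope is $\mathcal{U}(\mathcal{J}_{\mathbb{F}})=\mathfrak{F}/I$. *)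

theory Defs
  imports Main
begin

text \<open>p x q matrices over 'a are functions nat => nat => 'a; only entries with
  row index in {1..p} and column index in {1..q} are used.\<close>

definition matunit :: "nat \<Rightarrow> nat \<Rightarrow> nat \<Rightarrow> nat \<Rightarrow> 'a::field" where
  "matunit i j = (\<lambda>a b. if a = i \<and> b = j then 1 else 0)"

definition mtrans :: "(nat \<Rightarrow> nat \<Rightarrow> 'a) \<Rightarrow> nat \<Rightarrow> nat \<Rightarrow> 'a" where
  "mtrans y = (\<lambda>a b. y b a)"

definition mmul :: "nat \<Rightarrow> (nat \<Rightarrow> nat \<Rightarrow> 'a::field) \<Rightarrow> (nat \<Rightarrow> nat \<Rightarrow> 'a) \<Rightarrow> nat \<Rightarrow> nat \<Rightarrow> 'a" where
  "mmul n A B = (\<lambda>a c. \<Sum>b\<in>{1..n}. A a b * B b c)"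

definition madd :: "(nat \<Rightarrow> nat \<Rightarrow> 'a::field) \<Rightarrow> (nat \<Rightarrow> nat \<Rightarrow> 'a) \<Rightarrow> nat \<Rightarrow> nat \<Rightarrow> 'a" where
  "madd A B = (\<lambda>a b. A a b + B a b)"

definition jtriple :: "nat \<Rightarrow> nat \<Rightarrow> (nat \<Rightarrow> nat \<Rightarrow> 'a::field) \<Rightarrow> (nat \<Rightarrow> nat \<Rightarrow> 'a)
    \<Rightarrow> (nat \<Rightarrow> nat \<Rightarrow> 'a) \<Rightarrow> nat \<Rightarrow> nat \<Rightarrow> 'a" where
  "jtriple p q x y z =
     madd (mmul p (mmul q x (mtrans y)) z) (mmul p (mmul q z (mtrans y)) x)"

text \<open>Elements of the free algebra are finitely supported functions from words
  over the generators to 'a, vanishing on the empty word (no identity).\<close>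

definition gens :: "nat \<Rightarrow> nat \<Rightarrow> (nat \<times> nat) set" where
  "gens p q = {1..p} \<times> {1..q}"

definition freealg :: "nat \<Rightarrow> nat \<Rightarrow> ((nat \<times> nat) list \<Rightarrow> 'a::field) set" where
  "freealg p q = {f. finite {w. f w \<noteq> 0} \<and>
                      (\<forall>w. f w \<noteq> 0 \<longrightarrow> w \<noteq> [] \<and> set w \<subseteq> gens p q)}"

definition fzero :: "(nat \<times> nat) list \<Rightarrow> 'a::field" where
  "fzero = (\<lambda>w. 0)"

definition fadd :: "((nat \<times> nat) list \<Rightarrow> 'a::field) \<Rightarrow> ((nat \<times> nat) list \<Rightarrow> 'a) \<Rightarrow> (nat \<times> nat) list \<Rightarrow> 'a" where
  "fadd f g = (\<lambda>w. f w + g w)"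

definition fsub :: "((nat \<times> nat) list \<Rightarrow> 'a::field) \<Rightarrow> ((nat \<times> nat) list \<Rightarrow> 'a) \<Rightarrow> (nat \<times> nat) list \<Rightarrow> 'a" where
  "fsub f g = (\<lambda>w. f w - g w)"

definition fsmult :: "'a::field \<Rightarrow> ((nat \<times> nat) list \<Rightarrow> 'a) \<Rightarrow> (nat \<times> nat) list \<Rightarrow> 'a" where
  "fsmult c f = (\<lambda>w. c * f w)"

definition fmul :: "((nat \<times> nat) list \<Rightarrow> 'a::field) \<Rightarrow> ((nat \<times> nat) list \<Rightarrow> 'a) \<Rightarrow> (nat \<times> nat) list \<Rightarrow> 'a" where
  "fmul f g = (\<lambda>w. \<Sum>k\<in>{0..length w}. f (take k w) * g (drop k w))"

definition G :: "nat \<Rightarrow> nat \<Rightarrow> (nat \<times> nat) list \<Rightarrow> 'a::field" where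
  "G i j = (\<lambda>w. if w = [(i, j)] then 1 else 0)"

definition Phi :: "nat \<Rightarrow> nat \<Rightarrow> (nat \<Rightarrow> nat \<Rightarrow> 'a::field) \<Rightarrow> (nat \<times> nat) list \<Rightarrow> 'a" where
  "Phi p q X = (\<lambda>w. \<Sum>i\<in>{1..p}. \<Sum>j\<in>{1..q}. X i j * G i j w)"

definition envrels :: "nat \<Rightarrow> nat \<Rightarrow> ((nat \<times> nat) list \<Rightarrow> 'a::field) set" where
  "envrels p q = {fsub (fadd (fmul (fmul (G i j) (G k l)) (G s t))
                              (fmul (fmul (G s t) (G k l)) (G i j)))
                        (Phi p q (jtriple p q (matunit i j) (matunit k l) (matunit s t)))
                  | i j k l s t. i \<in> {1..p} \<and> j \<in> {1..q} \<and> k \<in> {1..p} \<and> l \<in> {1..q}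
                                 \<and> s \<in> {1..p} \<and> t \<in> {1..q}}"

inductive_set ideal_gen :: "nat \<Rightarrow> nat \<Rightarrow> ((nat \<times> nat) list \<Rightarrow> 'a::field) set
    \<Rightarrow> ((nat \<times> nat) list \<Rightarrow> 'a) set" for p q S where
  base: "s \<in> S \<Longrightarrow> s \<in> ideal_gen p q S"
| zero: "fzero \<in> ideal_gen p q S"
| add: "x \<in> ideal_gen p q S \<Longrightarrow> y \<in> ideal_gen p q S \<Longrightarrow> fadd x y \<in> ideal_gen p q S"
| smult: "x \<in> ideal_gen p q S \<Longrightarrow> fsmult c x \<in> ideal_gen p q S"
| lmul: "a \<in> freealg p q \<Longrightarrow> x \<in> ideal_gen p q S \<Longrightarrow> fmul a x \<in> ideal_gen p q S"
| rmul: "a \<in> freealg p q \<Longrightarrow> x \<in> ideal_gen p q S \<Longrightarrow> fmul x a \<in> ideal_gen p q S"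

definition envideal :: "nat \<Rightarrow> nat \<Rightarrow> ((nat \<times> nat) list \<Rightarrow> 'a::field) set" where
  "envideal p q = ideal_gen p q (envrels p q)"

text \<open>Jacobson radical of the (not necessarily unital) algebra F/I, via
  Jacobson's quasi-regularity characterisation: the class of z lies in the radical
  iff z a is right quasi-regular modulo I for every a, i.e. there is w with
  za + w - (za)w in I. Semisimple means the radical is zero, i.e. every such z
  lies in I.\<close>

definition in_quot_radical :: "nat \<Rightarrow> nat \<Rightarrow> ((nat \<times> nat) list \<Rightarrow> 'a::field) set
    \<Rightarrow> ((nat \<times> nat) list \<Rightarrow> 'a) \<Rightarrow> bool" where
  "in_quot_radical p q I z \<longleftrightarrow>
     (\<forall>a\<in>freealg p q. \<exists>w\<in>freealg p q.
        fsub (fadd (fmul z a) w) (fmul (fmul z a) w) \<in> I)"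

definition quot_semisimple :: "nat \<Rightarrow> nat \<Rightarrow> ((nat \<times> nat) list \<Rightarrow> 'a::field) set \<Rightarrow> bool" where
  "quot_semisimple p q I \<longleftrightarrow>
     (\<forall>z\<in>freealg p q. in_quot_radical p q I z \<longrightarrow> z \<in> I)"

definition universal_envelope_semisimple :: "'a::field itself \<Rightarrow> nat \<Rightarrow> nat \<Rightarrow> bool" where
  "universal_envelope_semisimple (_ :: 'a itself) p q \<longleftrightarrow>
     quot_semisimple p q (envideal p q :: ((nat \<times> nat) list \<Rightarrow> 'a) set)"

end

theory Submission
  imports Defs
begin


typedef ('a::field) W = "UNIV :: ((nat \<times> nat) list \<Rightarrow> 'a) set" by auto

setup_lifting type_definition_W

lemma fmul_assoc_raw:
  fixes f g h :: "(nat \<times> nat) list \<Rightarrow> 'a::field"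
  shows "fmul (fmul f g) h = fmul f (fmul g h)"
proof (rule ext)
  fix w :: "(nat \<times> nat) list"
  define L where "L = length w"
  define A where "A = (\<lambda>m n. f (take m w) * g (take n (drop m w)) * h (drop (m + n) w))"
  have "fmul (fmul f g) h w = (\<Sum>k\<le>L. \<Sum>m\<le>k. A m (k - m))"
    unfolding fmul_def A_def L_def atLeast0AtMost
    by (auto simp: sum_distrib_right min_def take_drop intro!: sum.cong)
  also have "\<dots> = (\<Sum>(m,n)\<in>{(m,n). m + n \<le> L}. A m n)"
    by (rule sum.triangle_reindex_eq[symmetric])
  also have "\<dots> = (\<Sum>m\<le>L. \<Sum>n\<le>L - m. A m n)"
  proof -
    have e: "{(m,n). m + n \<le> L} = Sigma {..L} (\<lambda>m. {..L - m})" by auto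
    show ?thesis unfolding e by (simp add: sum.Sigma)
  qed
  also have "\<dots> = fmul f (fmul g h) w"
    unfolding fmul_def A_def L_def atLeast0AtMost
    by (auto simp: sum_distrib_left mult.assoc add.commute intro!: sum.cong)
  finally show "fmul (fmul f g) h w = fmul f (fmul g h) w" .
qed


lemma fmul_one_left_raw: "fmul (\<lambda>w. if w = [] then 1 else 0) f = (f :: _ \<Rightarrow> 'a::field)"
proof (rule ext)
  fix w :: "(nat \<times> nat) list"
  have "fmul (\<lambda>w. if w = [] then 1 else 0) f w = (\<Sum>k\<in>{0..length w}. if k = 0 then f w else 0)"
    unfolding fmul_def by (rule sum.cong) auto
  also have "\<dots> = f w" by simp
  finally show "fmul (\<lambda>w. if w = [] then 1 else 0) f w = f w" .
qed

lemma fmul_one_right_raw: "fmul f (\<lambda>w. if w = [] then 1 else 0) = (f :: _ \<Rightarrow> 'a::field)"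
proof (rule ext)
  fix w :: "(nat \<times> nat) list"
  have "fmul f (\<lambda>w. if w = [] then 1 else 0) w = (\<Sum>k\<in>{0..length w}. if k = length w then f w else 0)"
    unfolding fmul_def by (rule sum.cong) auto
  also have "\<dots> = f w" by simp
  finally show "fmul f (\<lambda>w. if w = [] then 1 else 0) w = f w" .
qed

instantiation W :: (field) ring_1
begin
lift_definition zero_W :: "'a W" is "\<lambda>w. 0" .
lift_definition one_W :: "'a W" is "\<lambda>w. if w = [] then 1 else 0" .
lift_definition plus_W :: "'a W \<Rightarrow> 'a W \<Rightarrow> 'a W" is fadd .
lift_definition minus_W :: "'a W \<Rightarrow> 'a W \<Rightarrow> 'a W" is fsub .
lift_definition uminus_W :: "'a W \<Rightarrow> 'a W" is "\<lambda>f w. - f w" .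
lift_definition times_W :: "'a W \<Rightarrow> 'a W \<Rightarrow> 'a W" is fmul .
instance
proof
  fix a b c :: "'a W"
  show "a * b * c = a * (b * c)" by transfer (rule fmul_assoc_raw)
  show "a + b + c = a + (b + c)" by transfer (auto simp: fadd_def algebra_simps)
  show "a + b = b + a" by transfer (auto simp: fadd_def algebra_simps)
  show "0 + a = a" by transfer (auto simp: fadd_def)
  show "- a + a = 0" by transfer (auto simp: fadd_def)
  show "a - b = a + - b" by transfer (auto simp: fadd_def fsub_def)
  show "(a + b) * c = a * c + b * c" by transfer (auto simp: fadd_def fmul_def algebra_simps sum.distrib)
  show "a * (b + c) = a * b + a * c" by transfer (auto simp: fadd_def fmul_def algebra_simps sum.distrib)
  show "1 * a = a" by transfer (rule fmul_one_left_raw)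
  show "a * 1 = a" by transfer (rule fmul_one_right_raw)
  show "(0::'a W) \<noteq> 1" by transfer (metis one_neq_zero)
qed
end


lift_definition sc :: "'a::field \<Rightarrow> 'a W" is "\<lambda>c w. if w = [] then c else 0" .

lemma Rep_plus: "Rep_W (x + y) = fadd (Rep_W x) (Rep_W y)" by transfer simp
lemma Rep_minus: "Rep_W (x - y) = fsub (Rep_W x) (Rep_W y)" by transfer simp
lemma Rep_times: "Rep_W (x * y) = fmul (Rep_W x) (Rep_W y)" by transfer simp
lemma Rep_zero: "Rep_W 0 = fzero" by transfer (simp add: fzero_def)

lemma sc_mult_raw: "fmul (\<lambda>w. if w = [] then c else 0) f = fsmult c (f :: _ \<Rightarrow> 'a::field)"
proof (rule ext)
  fix w :: "(nat \<times> nat) list"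
  have "fmul (\<lambda>w. if w = [] then c else 0) f w = (\<Sum>k\<in>{0..length w}. if k = 0 then c * f w else 0)"
    unfolding fmul_def by (rule sum.cong) auto
  also have "\<dots> = fsmult c f w" by (simp add: fsmult_def)
  finally show "fmul (\<lambda>w. if w = [] then c else 0) f w = fsmult c f w" .
qed

lemma sc_mult_raw2: "fmul f (\<lambda>w. if w = [] then c else 0) = fsmult c (f :: _ \<Rightarrow> 'a::field)"
proof (rule ext)
  fix w :: "(nat \<times> nat) list"
  have "fmul f (\<lambda>w. if w = [] then c else 0) w = (\<Sum>k\<in>{0..length w}. if k = length w then c * f w else 0)"
    unfolding fmul_def by (rule sum.cong) auto
  also have "\<dots> = fsmult c f w" by (simp add: fsmult_def)
  finally show "fmul f (\<lambda>w. if w = [] then c else 0) w = fsmult c f w" .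
qed

lemma Rep_sc_times: "Rep_W (sc c * x) = fsmult c (Rep_W x)"
  by transfer (rule sc_mult_raw)

lemma sc_comm: "sc c * x = x * sc c"
  by transfer (simp add: sc_mult_raw sc_mult_raw2)

lemma sc_mult: "sc (c * d) = sc c * sc d"
  by transfer (simp add: sc_mult_raw fsmult_def fun_eq_iff)
lemma sc_add: "sc (c + d) = sc c + sc d"
  by transfer (simp add: fadd_def fun_eq_iff)
lemma sc_one: "sc 1 = 1" by transfer simp
lemma sc_zero: "sc 0 = 0" by transfer simp

lemma sc_assoc_left: "x * (sc c * y) = sc c * (x * y)"
  by (metis mult.assoc sc_comm)

lemma fmul_support:
  assumes "fmul f g w \<noteq> 0"
  shows "\<exists>u v. w = u @ v \<and> f u \<noteq> 0 \<and> g v \<noteq> 0"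
proof -
  from assms obtain k where "k \<in> {0..length w}" "f (take k w) * g (drop k w) \<noteq> 0"
    unfolding fmul_def by (meson sum.neutral)
  then show ?thesis by (intro exI[of _ "take k w"] exI[of _ "drop k w"]) auto
qed

lemma freealg_fmul:
  assumes "f \<in> freealg p q" "g \<in> freealg p q"
  shows "fmul f g \<in> freealg p q"
proof -
  let ?Sf = "{w. f w \<noteq> 0}" and ?Sg = "{w. g w \<noteq> 0}"
  have "{w. fmul f g w \<noteq> 0} \<subseteq> (\<lambda>(u,v). u @ v) ` (?Sf \<times> ?Sg)"
    using fmul_support by fastforce
  moreover have "finite ((\<lambda>(u,v). u @ v) ` (?Sf \<times> ?Sg))"
    using assms unfolding freealg_def by auto
  ultimately have fin: "finite {w. fmul f g w \<noteq> 0}" by (rule finite_subset)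
  have "w \<noteq> [] \<and> set w \<subseteq> gens p q" if "fmul f g w \<noteq> 0" for w
  proof -
    from fmul_support[OF that] obtain u v where "w = u @ v" "f u \<noteq> 0" "g v \<noteq> 0" by blast
    then show ?thesis using assms unfolding freealg_def by auto
  qed
  with fin show ?thesis unfolding freealg_def by blast
qed

lemma freealg_fadd:
  assumes "f \<in> freealg p q" "g \<in> freealg p q"
  shows "fadd f g \<in> freealg p q"
proof -
  have "{w. fadd f g w \<noteq> 0} \<subseteq> {w. f w \<noteq> 0} \<union> {w. g w \<noteq> 0}" by (auto simp: fadd_def)
  then show ?thesis using assms unfolding freealg_def
    by (auto simp: fadd_def intro: finite_subset)
qed

lemma freealg_fsmult:
  assumes "f \<in> freealg p q"
  shows "fsmult c f \<in> freealg p q"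
proof -
  have "{w. fsmult c f w \<noteq> 0} \<subseteq> {w. f w \<noteq> 0}" by (auto simp: fsmult_def)
  then show ?thesis using assms unfolding freealg_def
    by (auto simp: fsmult_def intro: finite_subset)
qed

lemma freealg_fzero: "fzero \<in> freealg p q"
  by (simp add: freealg_def fzero_def)

lemma fsub_eq: "fsub f g = fadd f (fsmult (-1) g)"
  by (simp add: fsub_def fadd_def fsmult_def fun_eq_iff)

lemma freealg_fsub: "f \<in> freealg p q \<Longrightarrow> g \<in> freealg p q \<Longrightarrow> fsub f g \<in> freealg p q"
  unfolding fsub_eq by (intro freealg_fadd freealg_fsmult)

lemma finite_gens: "finite (gens p q)" by (simp add: gens_def)

lemma G_freealg: "i \<in> {1..p} \<Longrightarrow> j \<in> {1..q} \<Longrightarrow> G i j \<in> freealg p q"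
  by (auto simp: freealg_def G_def gens_def)

lemma Phi_freealg: "Phi p q X \<in> freealg p q"
proof -
  have sub: "{w. Phi p q X w \<noteq> 0} \<subseteq> (\<lambda>x. [x]) ` gens p q"
  proof
    fix w assume "w \<in> {w. Phi p q X w \<noteq> 0}"
    then obtain i j where "i \<in> {1..p}" "j \<in> {1..q}" "X i j * G i j w \<noteq> 0"
      unfolding Phi_def by (metis (mono_tags, lifting) mem_Collect_eq sum.neutral)
    then show "w \<in> (\<lambda>x. [x]) ` gens p q" by (auto simp: G_def gens_def split: if_splits)
  qed
  then have "finite {w. Phi p q X w \<noteq> 0}" using finite_gens finite_subset by blast
  moreover have "w \<noteq> [] \<and> set w \<subseteq> gens p q" if "Phi p q X w \<noteq> 0" for w
    using sub that by auto
  ultimately show ?thesis unfolding freealg_def by blast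
qed

lemma envrels_freealg: "s \<in> envrels p q \<Longrightarrow> s \<in> freealg p q"
  unfolding envrels_def
  by (auto intro!: freealg_fsub freealg_fadd freealg_fmul G_freealg Phi_freealg)

lemma envideal_freealg: "x \<in> ideal_gen p q (envrels p q) \<Longrightarrow> x \<in> freealg p q"
proof (induction rule: ideal_gen.induct)
  case (base s)
  then show ?case by (rule envrels_freealg)
qed (auto intro: freealg_fadd freealg_fsmult freealg_fmul freealg_fzero)


lemma sum_if_delta: "finite A \<Longrightarrow> (\<Sum>b\<in>A. (if b = j then c else 0)) = (if j \<in> A then c else (0::'a::comm_monoid_add))"
  by (simp add: sum.delta')

lemma mm1: assumes j: "j \<in> {1..q}" shows "mmul q (matunit i j) (mtrans (matunit k l)) = (\<lambda>a c. if a = i \<and> c = k \<and> j = l then (1::'a::field) else 0)"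
proof (intro ext)
  fix a c
  have "mmul q (matunit i j) (mtrans (matunit k l)) a c = (\<Sum>b\<in>{1..q}. if b = j then (if a = i \<and> c = k \<and> j = l then (1::'a) else 0) else 0)"
    unfolding mmul_def matunit_def mtrans_def by (rule sum.cong) auto
  also have "\<dots> = (if a = i \<and> c = k \<and> j = l then 1 else 0)" using j by (simp add: sum_if_delta)
  finally show "mmul q (matunit i j) (mtrans (matunit k l)) a c = (if a = i \<and> c = k \<and> j = l then (1::'a) else 0)" .
qed

lemma mm2: assumes k: "k \<in> {1..n}" shows "mmul n (\<lambda>a c. if a = i \<and> c = k \<and> P then (1::'a::field) else 0) (matunit s t) = (\<lambda>a d. if a = i \<and> d = t \<and> P \<and> k = s then 1 else 0)"
proof (intro ext)
  fix a d
  have "mmul n (\<lambda>a c. if a = i \<and> c = k \<and> P then (1::'a) else 0) (matunit s t) a d = (\<Sum>c\<in>{1..n}. if c = k then (if a = i \<and> d = t \<and> P \<and> k = s then 1 else 0) else 0)"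
    unfolding mmul_def matunit_def by (rule sum.cong) auto
  also have "\<dots> = (if a = i \<and> d = t \<and> P \<and> k = s then 1 else 0)" using k by (simp add: sum_if_delta)
  finally show "mmul n (\<lambda>a c. if a = i \<and> c = k \<and> P then (1::'a) else 0) (matunit s t) a d = (if a = i \<and> d = t \<and> P \<and> k = s then (1::'a) else 0)" .
qed

lemma jtriple_units:
  assumes "i \<in> {1..p}" "k \<in> {1..p}" "s \<in> {1..p}" "j \<in> {1..q}" "l \<in> {1..q}" "t \<in> {1..q}"
  shows "jtriple p q (matunit i j) (matunit k l) (matunit s t) =
     (\<lambda>a d. (if a = i \<and> d = t \<and> j = l \<and> k = s then (1::'a::field) else 0) + (if a = s \<and> d = j \<and> t = l \<and> k = i then 1 else 0))"
  unfolding jtriple_def madd_def using assms by (simp add: mm1 mm2)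

lemma dsum2: "i \<in> {1..(p::nat)} \<Longrightarrow> t \<in> {1..(q::nat)} \<Longrightarrow>
  (\<Sum>a\<in>{1..p}. \<Sum>d\<in>{1..q}. (if a = i \<and> d = t \<and> P then X else (0::'a::field))) = (if P then X else 0)"
proof -
  assume a: "i \<in> {1..p}" "t \<in> {1..q}"
  have "(\<Sum>a\<in>{1..p}. \<Sum>d\<in>{1..q}. (if a = i \<and> d = t \<and> P then X else (0::'a))) =
        (\<Sum>a\<in>{1..p}. \<Sum>d\<in>{1..q}. (if d = t then (if a = i \<and> P then X else 0) else 0))"
    by (intro sum.cong refl) auto
  also have "\<dots> = (\<Sum>a\<in>{1..p}. (if a = i then (if P then X else 0) else 0))"
    using a by (intro sum.cong refl) (subst sum_if_delta, auto)
  also have "\<dots> = (if P then X else 0)" using a by (subst sum_if_delta, auto)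
  finally show ?thesis .
qed

lemma Phi_units:
  assumes "i \<in> {1..p}" "s \<in> {1..p}" "j \<in> {1..q}" "t \<in> {1..q}"
  shows "Phi p q (\<lambda>a d. (if a = i \<and> d = t \<and> P then (1::'a::field) else 0) + (if a = s \<and> d = j \<and> Q then 1 else 0))
     = fadd (if P then G i t else fzero) (if Q then G s j else fzero)"
proof (rule ext)
  fix w
  have "Phi p q (\<lambda>a d. (if a = i \<and> d = t \<and> P then (1::'a::field) else 0) + (if a = s \<and> d = j \<and> Q then 1 else 0)) w
     = (\<Sum>a\<in>{1..p}. \<Sum>d\<in>{1..q}. (if a = i \<and> d = t \<and> P then G i t w else 0) + (if a = s \<and> d = j \<and> Q then G s j w else 0))"
    unfolding Phi_def by (intro sum.cong refl) (auto simp: algebra_simps)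
  also have "\<dots> = (\<Sum>a\<in>{1..p}. \<Sum>d\<in>{1..q}. (if a = i \<and> d = t \<and> P then G i t w else 0)) + (\<Sum>a\<in>{1..p}. \<Sum>d\<in>{1..q}. (if a = s \<and> d = j \<and> Q then G s j w else 0))"
    by (simp only: sum.distrib)
  also have "\<dots> = (if P then G i t w else 0) + (if Q then G s j w else 0)"
    using assms by (simp only: dsum2)
  finally show "Phi p q (\<lambda>a d. (if a = i \<and> d = t \<and> P then (1::'a::field) else 0) + (if a = s \<and> d = j \<and> Q then 1 else 0)) w
     = fadd (if P then G i t else fzero) (if Q then G s j else fzero) w"
    by (simp add: fadd_def fzero_def)
qed


lemma Rep_Abs_W[simp]: "Rep_W (Abs_W f) = f"
  by (simp add: Abs_W_inverse)

lemma Rep_uminus: "Rep_W (- x) = fsmult (-1) (Rep_W x)"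
  by transfer (simp add: fsmult_def)

locale env =
  fixes p q :: nat
  assumes p2: "1 < p" and q2: "1 < q"
begin

definition inF :: "'a::field W \<Rightarrow> bool" where "inF x \<longleftrightarrow> Rep_W x \<in> freealg p q"
definition inI :: "'a::field W \<Rightarrow> bool" where "inI x \<longleftrightarrow> Rep_W x \<in> envideal p q"
definition cg :: "'a::field W \<Rightarrow> 'a W \<Rightarrow> bool" (infix "\<approx>" 50) where "x \<approx> y \<longleftrightarrow> inI (x - y)"
definition g :: "nat \<Rightarrow> nat \<Rightarrow> 'a::field W" where
  "g i j = (if i \<in> {1..p} \<and> j \<in> {1..q} then Abs_W (G i j) else 0)"

lemma inF_add[simp]: "inF x \<Longrightarrow> inF y \<Longrightarrow> inF (x + y)"
  unfolding inF_def by (simp add: Rep_plus freealg_fadd)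
lemma inF_mult[simp]: "inF x \<Longrightarrow> inF y \<Longrightarrow> inF (x * y)"
  unfolding inF_def by (simp add: Rep_times freealg_fmul)
lemma inF_diff[simp]: "inF x \<Longrightarrow> inF y \<Longrightarrow> inF (x - y)"
  unfolding inF_def by (simp add: Rep_minus freealg_fsub)
lemma inF_sc[simp]: "inF x \<Longrightarrow> inF (sc c * x)"
  unfolding inF_def by (simp add: Rep_sc_times freealg_fsmult)
lemma inF_uminus[simp]: "inF x \<Longrightarrow> inF (- x)"
  unfolding inF_def by (simp add: Rep_uminus freealg_fsmult)
lemma inF_zero[simp]: "inF 0"
  unfolding inF_def by (simp add: Rep_zero freealg_fzero)
lemma inF_g[simp]: "inF (g i j)"
  unfolding g_def by (auto simp: inF_def Rep_zero freealg_fzero intro: G_freealg)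
lemma inF_sum[simp]: "(\<And>x. x \<in> A \<Longrightarrow> inF (f x)) \<Longrightarrow> inF (sum f A)"
  by (induction A rule: infinite_finite_induct) auto

lemma inI_inF: "inI x \<Longrightarrow> inF x"
  unfolding inI_def inF_def envideal_def by (rule envideal_freealg)

lemma inI_add[intro]: "inI x \<Longrightarrow> inI y \<Longrightarrow> inI (x + y)"
  unfolding inI_def envideal_def by (simp add: Rep_plus ideal_gen.add)
lemma inI_sc[intro]: "inI x \<Longrightarrow> inI (sc c * x)"
  unfolding inI_def envideal_def by (simp add: Rep_sc_times ideal_gen.smult)
lemma inI_uminus[intro]: "inI x \<Longrightarrow> inI (- x)"
  unfolding inI_def envideal_def by (simp add: Rep_uminus ideal_gen.smult)
lemma inI_diff[intro]: "inI x \<Longrightarrow> inI y \<Longrightarrow> inI (x - y)"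
  by (metis diff_conv_add_uminus inI_add inI_uminus)
lemma inI_zero[intro]: "inI 0"
  unfolding inI_def envideal_def by (simp add: Rep_zero ideal_gen.zero)
lemma inI_lmul[intro]: "inF a \<Longrightarrow> inI x \<Longrightarrow> inI (a * x)"
  unfolding inI_def inF_def envideal_def by (simp add: Rep_times ideal_gen.lmul)
lemma inI_rmul[intro]: "inF a \<Longrightarrow> inI x \<Longrightarrow> inI (x * a)"
  unfolding inI_def inF_def envideal_def by (simp add: Rep_times ideal_gen.rmul)
lemma inI_sum[intro]: "(\<And>x. x \<in> A \<Longrightarrow> inI (f x)) \<Longrightarrow> inI (sum f A)"
  by (induction A rule: infinite_finite_induct) auto

lemma cg_refl[simp]: "x \<approx> x" by (simp add: cg_def inI_zero)
lemma cg_eq: "x = y \<Longrightarrow> x \<approx> y" by simp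
lemma cg_sym: "x \<approx> y \<Longrightarrow> y \<approx> x"
  unfolding cg_def by (metis inI_uminus minus_diff_eq)
lemma cg_trans[trans]: "x \<approx> y \<Longrightarrow> y \<approx> z \<Longrightarrow> x \<approx> z"
proof -
  assume "x \<approx> y" "y \<approx> z"
  moreover have "x - z = (x - y) + (y - z)" by simp
  ultimately show ?thesis unfolding cg_def by (metis inI_add)
qed
lemma cg_add: "x \<approx> y \<Longrightarrow> x' \<approx> y' \<Longrightarrow> x + x' \<approx> y + y'"
proof -
  assume "x \<approx> y" "x' \<approx> y'"
  moreover have "(x + x') - (y + y') = (x - y) + (x' - y')" by (simp add: algebra_simps)
  ultimately show ?thesis unfolding cg_def by (metis inI_add)
qed
lemma cg_diff: "x \<approx> y \<Longrightarrow> x' \<approx> y' \<Longrightarrow> x - x' \<approx> y - y'"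
proof -
  assume "x \<approx> y" "x' \<approx> y'"
  moreover have "(x - x') - (y - y') = (x - y) - (x' - y')" by (simp add: algebra_simps)
  ultimately show ?thesis unfolding cg_def by (metis inI_diff)
qed
lemma cg_lmul: "x \<approx> y \<Longrightarrow> inF u \<Longrightarrow> u * x \<approx> u * y"
  unfolding cg_def by (metis inI_lmul right_diff_distrib)
lemma cg_rmul: "x \<approx> y \<Longrightarrow> inF u \<Longrightarrow> x * u \<approx> y * u"
  unfolding cg_def by (metis inI_rmul left_diff_distrib)
lemma cg_sc: "x \<approx> y \<Longrightarrow> sc c * x \<approx> sc c * y"
  unfolding cg_def by (metis inI_sc right_diff_distrib)
lemma cg_uminus: "x \<approx> y \<Longrightarrow> - x \<approx> - y"
proof -
  assume "x \<approx> y"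
  moreover have "- x - - y = - (x - y)" by (simp add: algebra_simps)
  ultimately show ?thesis unfolding cg_def by (metis inI_uminus)
qed
lemma cg_sum: "(\<And>a. a \<in> A \<Longrightarrow> f a \<approx> h a) \<Longrightarrow> sum f A \<approx> sum h A"
  unfolding cg_def by (simp add: inI_sum flip: sum_subtractf)

lemma half: "inI (x + x) \<Longrightarrow> inI (x :: 'a::field_char_0 W)"
proof -
  assume "inI (x + x)"
  then have "inI (sc (1/2) * (x + x))" by (rule inI_sc)
  moreover have "sc (1/2) * (x + x) = (sc (1/2) + sc (1/2)) * x"
    by (simp add: distrib_left distrib_right)
  moreover have "sc (1/2) + sc (1/2) = (1 :: 'a W)"
    by (simp flip: sc_add sc_one)
  ultimately show ?thesis by simp
qed

lemma Rep_g: "i \<in> {1..p} \<Longrightarrow> j \<in> {1..q} \<Longrightarrow> Rep_W (g i j) = G i j"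
  by (simp add: g_def)

lemma Rep_if_g: "i \<in> {1..p} \<Longrightarrow> j \<in> {1..q} \<Longrightarrow> Rep_W (if P then g i j else 0) = (if P then G i j else fzero)"
  by (simp add: g_def Rep_zero)

lemma REL:
  assumes "i \<in> {1..p}" "k \<in> {1..p}" "s \<in> {1..p}" "j \<in> {1..q}" "l \<in> {1..q}" "t \<in> {1..q}"
  shows "g i j * g k l * g s t + g s t * g k l * g i j \<approx>
     (if j = l \<and> k = s then g i t else 0) + (if l = t \<and> k = i then g s j else (0::'a::field W))"
proof -
  have "fsub (fadd (fmul (fmul (G i j) (G k l)) (G s t)) (fmul (fmul (G s t) (G k l)) (G i j)))
          (Phi p q (jtriple p q (matunit i j) (matunit k l) (matunit s t))) \<in> envrels p q"
    unfolding envrels_def using assms by blast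
  moreover have "Phi p q (jtriple p q (matunit i j) (matunit k l) (matunit s t)) =
      fadd (if j = l \<and> k = s then G i t else fzero) (if l = t \<and> k = i then G s j else (fzero :: _ \<Rightarrow> 'a))"
    using assms by (simp add: jtriple_units eq_commute[of t l] Phi_units)
  moreover have "Rep_W (g i j * g k l * g s t + g s t * g k l * g i j -
     ((if j = l \<and> k = s then g i t else 0) + (if l = t \<and> k = i then g s j else (0::'a::field W)))) =
     fsub (fadd (fmul (fmul (G i j) (G k l)) (G s t)) (fmul (fmul (G s t) (G k l)) (G i j)))
       (fadd (if j = l \<and> k = s then G i t else fzero) (if l = t \<and> k = i then G s j else fzero))"
    using assms by (simp add: Rep_minus Rep_plus Rep_times Rep_g Rep_if_g split del: if_split)
  ultimately show ?thesis
    unfolding cg_def inI_def envideal_def by (metis ideal_gen.base)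
qed

end


context env
begin

abbreviation RR :: "nat \<Rightarrow> bool" where "RR i \<equiv> i \<in> {1..p}"
abbreviation CC :: "nat \<Rightarrow> bool" where "CC j \<equiv> j \<in> {1..q}"

definition aa :: "nat \<Rightarrow> nat \<Rightarrow> 'a::field_char_0 W" where "aa i j = g i j * g i j"
definition cc :: "nat \<Rightarrow> nat" where "cc t = (if t = 1 then 2 else 1)"
definition rr :: "nat \<Rightarrow> nat" where "rr i = (if i = 1 then 2 else 1)"
definition X :: "nat \<Rightarrow> nat \<Rightarrow> 'a::field_char_0 W" where "X i t = aa i (cc t) * g i t"
definition Y :: "nat \<Rightarrow> nat \<Rightarrow> 'a::field_char_0 W" where "Y t i = g i t * aa i (cc t)"

lemma RR1[simp]: "1 \<le> p" using p2 by auto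
lemma RR2[simp]: "2 \<le> p" using p2 by auto
lemma CC1[simp]: "1 \<le> q" using q2 by auto
lemma CC2[simp]: "2 \<le> q" using q2 by auto
lemma CCc[simp]: "1 \<le> cc t" "Suc 0 \<le> cc t" "0 < cc t" "cc t \<le> q" using q2 by (auto simp: cc_def)
lemma RRr[simp]: "1 \<le> rr i" "Suc 0 \<le> rr i" "0 < rr i" "rr i \<le> p" using p2 by (auto simp: rr_def)
lemma cc_neq[simp]: "cc t \<noteq> t" "t \<noteq> cc t" by (auto simp: cc_def)
lemma rr_neq[simp]: "rr i \<noteq> i" "i \<noteq> rr i" by (auto simp: rr_def)
lemma inF_aa[simp]: "inF (aa i j)" by (simp add: aa_def)
lemma inF_X[simp]: "inF (X i j)" by (simp add: X_def)
lemma inF_Y[simp]: "inF (Y i j)" by (simp add: Y_def)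

lemma cg_l: "x \<approx> y \<Longrightarrow> inF u \<Longrightarrow> u * x \<approx> u * y" by (rule cg_lmul)
lemma cg_r: "x \<approx> y \<Longrightarrow> inF v \<Longrightarrow> x * v \<approx> y * v" by (rule cg_rmul)
lemma cg_lr: "x \<approx> y \<Longrightarrow> inF u \<Longrightarrow> inF v \<Longrightarrow> u * x * v \<approx> u * y * v"
  by (intro cg_l cg_r) simp_all
lemma cg_by: "inI d \<Longrightarrow> x - y = d \<Longrightarrow> x \<approx> y" by (simp add: cg_def)
lemma cgI: "x \<approx> y \<Longrightarrow> inI (x - y)" by (simp add: cg_def)
lemma cg0I: "x \<approx> 0 \<Longrightarrow> inI x" by (simp add: cg_def)

lemma cube: assumes "RR i" "CC j" shows "g i j * g i j * g i j \<approx> (g i j :: 'a::field_char_0 W)"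
proof -
  have "g i j * g i j * g i j + g i j * g i j * g i j \<approx> g i j + (g i j :: 'a W)"
    using REL[of i i i j j j] assms by simp
  then have "inI ((g i j * g i j * g i j - g i j) + (g i j * g i j * g i j - (g i j :: 'a W)))"
    unfolding cg_def by (simp add: algebra_simps)
  then show ?thesis unfolding cg_def by (rule half)
qed

lemma idem: assumes "RR i" "CC j" shows "aa i j * aa i j \<approx> (aa i j :: 'a::field_char_0 W)"
proof -
  have "aa i j * aa i j = (g i j * g i j * g i j) * (g i j :: 'a W)" by (simp add: aa_def mult.assoc)
  also have "\<dots> \<approx> g i j * g i j" by (rule cg_r[OF cube]) (use assms in simp_all)
  also have "\<dots> = aa i j" by (simp add: aa_def)
  finally show ?thesis .
qed

lemma PR: assumes "RR i" "CC j" "RR s" "CC t"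
  shows "aa i j * g s t + g s t * aa i j \<approx> (if i = s then g s t else 0) + (if j = t then g s t else (0::'a::field_char_0 W))"
proof -
  have "g i j * g i j * g s t + g s t * g i j * g i j \<approx> (if j = j \<and> i = s then g i t else 0) + (if j = t \<and> i = i then g s j else (0::'a W))"
    using REL[of i i s j j t] assms by simp
  then show ?thesis by (simp add: aa_def mult.assoc split: if_splits)
qed

lemma P0: assumes "RR i" "CC j" "RR s" "CC t" "i \<noteq> s" "j \<noteq> t"
  shows "aa i j * g s t \<approx> (0::'a::field_char_0 W)" "g s t * aa i j \<approx> (0::'a::field_char_0 W)"
proof -
  define P where "P = (aa i j :: 'a W)"
  define b where "b = (g s t :: 'a W)"
  define r where "r = P * b + b * P"
  define ss where "ss = P * P - P"
  have r: "inI r" using PR[of i j s t] assms by (simp add: cg_def r_def P_def b_def)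
  have s: "inI ss" using idem[of i j] assms by (simp add: cg_def ss_def P_def)
  have fP: "inF P" and fb: "inF b" by (simp_all add: P_def b_def)
  have "inI (P * r - r * P + r - ss * b + b * ss)"
    using r s fP fb by (intro inI_add inI_diff inI_lmul inI_rmul) simp_all
  moreover have "P * r - r * P + r - ss * b + b * ss = P * b + P * b"
    unfolding r_def ss_def by (simp add: algebra_simps)
  ultimately have "inI (P * b + P * b)" by simp
  then have "inI (P * b)" by (rule half)
  then show "aa i j * g s t \<approx> (0::'a W)" by (simp add: cg_def P_def b_def)
  have "inI (r * P - P * r + r + ss * b - b * ss)"
    using r s fP fb by (intro inI_add inI_diff inI_lmul inI_rmul) simp_all
  moreover have "r * P - P * r + r + ss * b - b * ss = b * P + b * P"
    unfolding r_def ss_def by (simp add: algebra_simps)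
  ultimately have "inI (b * P + b * P)" by simp
  then have "inI (b * P)" by (rule half)
  then show "g s t * aa i j \<approx> (0::'a W)" by (simp add: cg_def P_def b_def)
qed

lemma Z2: assumes "RR i" "CC j" "RR k" "CC l" "i \<noteq> k" "j \<noteq> l"
  shows "g i j * g k l \<approx> (0::'a::field_char_0 W)"
proof -
  have "g i j * g k l \<approx> (g i j * g i j * g i j) * (g k l :: 'a W)"
    by (rule cg_sym, rule cg_r[OF cube]) (use assms in simp_all)
  also have "\<dots> = g i j * (aa i j * g k l)" by (simp add: aa_def mult.assoc)
  also have "\<dots> \<approx> g i j * 0" by (rule cg_l[OF P0(1)]) (use assms in simp_all)
  finally show ?thesis by simp
qed

lemma Zaa: assumes "RR i" "CC j" "RR k" "CC l" "i \<noteq> k" "j \<noteq> l"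
  shows "aa i j * aa k l \<approx> (0::'a::field_char_0 W)"
proof -
  have "aa i j * aa k l = g i j * (g i j * g k l) * (g k l :: 'a W)" by (simp add: aa_def mult.assoc)
  also have "\<dots> \<approx> g i j * 0 * g k l" by (rule cg_lr[OF Z2]) (use assms in simp_all)
  finally show ?thesis by simp
qed

lemma P1: assumes "RR i" "CC j" "RR s" "CC t" "(i = s) \<noteq> (j = t)"
  shows "aa i j * g s t + g s t * aa i j \<approx> (g s t::'a::field_char_0 W)"
  using PR[of i j s t] assms by (auto split: if_splits)

lemma G0: assumes "RR i" "CC t" shows "g i t \<approx> X i t + (Y t i :: 'a::field_char_0 W)"
  unfolding X_def Y_def by (rule cg_sym, rule P1) (use assms in simp_all)


lemma T1: assumes "RR i" "RR k" "CC j" "CC t" "CC c" "k \<noteq> i" "j \<noteq> t" "c \<noteq> t"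
  shows "aa i c * g i t \<approx> g i j * g k j * (g k t :: 'a::field_char_0 W)"
proof -
  have rel: "g i j * g k j * g k t + g k t * g k j * g i j \<approx> (g i t :: 'a W)"
    using REL[of i k k j j t] assms by simp
  have A: "aa i c * (g i j * g k j * g k t) \<approx> g i j * g k j * (g k t :: 'a W)"
  proof (cases "c = j")
    case True
    have "aa i c * (g i j * g k j * g k t) = (g i j * g i j * g i j) * (g k j * (g k t :: 'a W))"
      using True by (simp add: aa_def mult.assoc)
    also have "\<dots> \<approx> g i j * (g k j * g k t)" by (rule cg_r[OF cube]) (use assms in simp_all)
    finally show ?thesis by (simp add: mult.assoc)
  next
    case False
    have p1: "aa i c * g i j + g i j * aa i c \<approx> (g i j :: 'a W)" by (rule P1) (use assms False in auto)
    have "aa i c * (g i j * g k j * g k t) = (aa i c * g i j + g i j * aa i c) * (g k j * g k t) - g i j * (aa i c * g k j) * (g k t :: 'a W)"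
      by (simp add: algebra_simps)
    also have "\<dots> \<approx> g i j * (g k j * g k t) - g i j * 0 * g k t"
      by (intro cg_diff cg_r[OF p1] cg_lr[OF P0(1)]) (use assms False in simp_all)
    finally show ?thesis by (simp add: mult.assoc)
  qed
  have B: "aa i c * (g k t * g k j * g i j) \<approx> (0 :: 'a W)"
  proof -
    have "aa i c * (g k t * g k j * g i j) = (aa i c * g k t) * (g k j * (g i j :: 'a W))" by (simp add: mult.assoc)
    also have "\<dots> \<approx> 0 * (g k j * g i j)" by (rule cg_r[OF P0(1)]) (use assms in simp_all)
    finally show ?thesis by simp
  qed
  have "aa i c * g i t \<approx> aa i c * (g i j * g k j * g k t + g k t * g k j * (g i j :: 'a W))"
    by (rule cg_sym, rule cg_l[OF rel]) simp
  also have "\<dots> = aa i c * (g i j * g k j * g k t) + aa i c * (g k t * g k j * g i j)" by (simp add: distrib_left)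
  also have "\<dots> \<approx> g i j * g k j * g k t + 0" by (rule cg_add[OF A B])
  finally show ?thesis by simp
qed

lemma T1': assumes "RR i" "RR k" "CC j" "CC t" "k \<noteq> i" "j \<noteq> t"
  shows "g i t * aa k t \<approx> g i j * g k j * (g k t :: 'a::field_char_0 W)"
proof -
  have rel: "g i j * g k j * g k t + g k t * g k j * g i j \<approx> (g i t :: 'a W)"
    using REL[of i k k j j t] assms by simp
  have A: "(g i j * g k j * g k t) * aa k t \<approx> g i j * g k j * (g k t :: 'a W)"
  proof -
    have "(g i j * g k j * g k t) * aa k t = (g i j * g k j) * (g k t * g k t * (g k t :: 'a W))"
      by (simp add: aa_def mult.assoc)
    also have "\<dots> \<approx> (g i j * g k j) * g k t" by (rule cg_l[OF cube]) (use assms in simp_all)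
    finally show ?thesis .
  qed
  have B: "(g k t * g k j * g i j) * aa k t \<approx> (0 :: 'a W)"
  proof -
    have "(g k t * g k j * g i j) * aa k t = (g k t * g k j) * (g i j * (aa k t :: 'a W))" by (simp add: mult.assoc)
    also have "\<dots> \<approx> (g k t * g k j) * 0" by (rule cg_l[OF P0(2)]) (use assms in simp_all)
    finally show ?thesis by simp
  qed
  have "g i t * aa k t \<approx> (g i j * g k j * g k t + g k t * g k j * g i j) * (aa k t :: 'a W)"
    by (rule cg_sym, rule cg_r[OF rel]) simp
  also have "\<dots> = (g i j * g k j * g k t) * aa k t + (g k t * g k j * g i j) * aa k t" by (simp add: distrib_right)
  also have "\<dots> \<approx> g i j * g k j * g k t + 0" by (rule cg_add[OF A B])
  finally show ?thesis by simp
qed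

lemma XR: assumes "RR i" "CC t" "CC c" "c \<noteq> t"
  shows "aa i c * g i t \<approx> (X i t :: 'a::field_char_0 W)"
proof -
  have "aa i c * g i t \<approx> g i (cc t) * g (rr i) (cc t) * (g (rr i) t :: 'a W)"
    by (rule T1) (use assms in auto)
  also have "\<dots> \<approx> aa i (cc t) * g i t"
    by (rule cg_sym, rule T1) (use assms in auto)
  finally show ?thesis by (simp add: X_def)
qed

lemma XC: assumes "RR i" "RR k" "CC t" "k \<noteq> i"
  shows "g i t * aa k t \<approx> (X i t :: 'a::field_char_0 W)"
proof -
  have "g i t * aa k t \<approx> g i (cc t) * g k (cc t) * (g k t :: 'a W)"
    by (rule T1') (use assms in auto)
  also have "\<dots> \<approx> aa i (cc t) * g i t"
    by (rule cg_sym, rule T1) (use assms in auto)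
  finally show ?thesis by (simp add: X_def)
qed

lemma T2: assumes "RR i" "RR k" "CC j" "CC t" "CC c" "k \<noteq> i" "j \<noteq> t" "c \<noteq> t"
  shows "g i t * aa i c \<approx> g k t * g k j * (g i j :: 'a::field_char_0 W)"
proof -
  have rel: "g k t * g k j * g i j + g i j * g k j * g k t \<approx> (g i t :: 'a W)"
    using REL[of k k i t j j] assms by simp
  have A: "(g k t * g k j * g i j) * aa i c \<approx> g k t * g k j * (g i j :: 'a W)"
  proof (cases "c = j")
    case True
    have "(g k t * g k j * g i j) * aa i c = (g k t * g k j) * (g i j * g i j * (g i j :: 'a W))"
      using True by (simp add: aa_def mult.assoc)
    also have "\<dots> \<approx> (g k t * g k j) * g i j" by (rule cg_l[OF cube]) (use assms in simp_all)
    finally show ?thesis .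
  next
    case False
    have p1: "aa i c * g i j + g i j * aa i c \<approx> (g i j :: 'a W)" by (rule P1) (use assms False in auto)
    have "(g k t * g k j * g i j) * aa i c = (g k t * g k j) * (aa i c * g i j + g i j * aa i c) - g k t * (g k j * aa i c) * (g i j :: 'a W)"
      by (simp add: algebra_simps)
    also have "\<dots> \<approx> (g k t * g k j) * g i j - g k t * 0 * g i j"
      by (intro cg_diff cg_l[OF p1] cg_lr[OF P0(2)]) (use assms False in simp_all)
    finally show ?thesis by simp
  qed
  have B: "(g i j * g k j * g k t) * aa i c \<approx> (0 :: 'a W)"
  proof -
    have "(g i j * g k j * g k t) * aa i c = (g i j * g k j) * (g k t * (aa i c :: 'a W))" by (simp add: mult.assoc)
    also have "\<dots> \<approx> (g i j * g k j) * 0" by (rule cg_l[OF P0(2)]) (use assms in simp_all)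
    finally show ?thesis by simp
  qed
  have "g i t * aa i c \<approx> (g k t * g k j * g i j + g i j * g k j * g k t) * (aa i c :: 'a W)"
    by (rule cg_sym, rule cg_r[OF rel]) simp
  also have "\<dots> = (g k t * g k j * g i j) * aa i c + (g i j * g k j * g k t) * aa i c" by (simp add: distrib_right)
  also have "\<dots> \<approx> g k t * g k j * g i j + 0" by (rule cg_add[OF A B])
  finally show ?thesis by simp
qed

lemma T2': assumes "RR i" "RR k" "CC j" "CC t" "k \<noteq> i" "j \<noteq> t"
  shows "aa k t * g i t \<approx> g k t * g k j * (g i j :: 'a::field_char_0 W)"
proof -
  have rel: "g k t * g k j * g i j + g i j * g k j * g k t \<approx> (g i t :: 'a W)"
    using REL[of k k i t j j] assms by simp
  have A: "aa k t * (g k t * g k j * g i j) \<approx> g k t * g k j * (g i j :: 'a W)"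
  proof -
    have "aa k t * (g k t * g k j * g i j) = (g k t * g k t * g k t) * (g k j * (g i j :: 'a W))"
      by (simp add: aa_def mult.assoc)
    also have "\<dots> \<approx> g k t * (g k j * g i j)" by (rule cg_r[OF cube]) (use assms in simp_all)
    finally show ?thesis by (simp add: mult.assoc)
  qed
  have B: "aa k t * (g i j * g k j * g k t) \<approx> (0 :: 'a W)"
  proof -
    have "aa k t * (g i j * g k j * g k t) = (aa k t * g i j) * (g k j * (g k t :: 'a W))" by (simp add: mult.assoc)
    also have "\<dots> \<approx> 0 * (g k j * g k t)" by (rule cg_r[OF P0(1)]) (use assms in simp_all)
    finally show ?thesis by simp
  qed
  have "aa k t * g i t \<approx> aa k t * (g k t * g k j * g i j + g i j * g k j * (g k t :: 'a W))"
    by (rule cg_sym, rule cg_l[OF rel]) simp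
  also have "\<dots> = aa k t * (g k t * g k j * g i j) + aa k t * (g i j * g k j * g k t)" by (simp add: distrib_left)
  also have "\<dots> \<approx> g k t * g k j * g i j + 0" by (rule cg_add[OF A B])
  finally show ?thesis by simp
qed

lemma YR: assumes "RR i" "CC t" "CC c" "c \<noteq> t"
  shows "g i t * aa i c \<approx> (Y t i :: 'a::field_char_0 W)"
proof -
  have "g i t * aa i c \<approx> g (rr i) t * g (rr i) (cc t) * (g i (cc t) :: 'a W)"
    by (rule T2) (use assms in auto)
  also have "\<dots> \<approx> g i t * aa i (cc t)"
    by (rule cg_sym, rule T2) (use assms in auto)
  finally show ?thesis by (simp add: Y_def)
qed

lemma YC: assumes "RR i" "RR k" "CC t" "k \<noteq> i"
  shows "aa k t * g i t \<approx> (Y t i :: 'a::field_char_0 W)"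
proof -
  have "aa k t * g i t \<approx> g k t * g k (cc t) * (g i (cc t) :: 'a W)"
    by (rule T2') (use assms in auto)
  also have "\<dots> \<approx> g i t * aa i (cc t)"
    by (rule cg_sym, rule T2) (use assms in auto)
  finally show ?thesis by (simp add: Y_def)
qed

end


context env
begin

lemma Zcol: assumes "RR i" "RR k" "RR s" "CC t" "i \<noteq> k" "k \<noteq> s"
  shows "g i t * g k t * g s t \<approx> (0::'a::field_char_0 W)"
proof -
  have "g i t * g k t * g s t \<approx> g i t * (X k t + Y t k) * (g s t :: 'a W)"
    by (rule cg_lr[OF G0]) (use assms in simp_all)
  also have "\<dots> = (g i t * aa k (cc t)) * g k t * g s t + g i t * g k t * (aa k (cc t) * g s t)"
    by (simp add: X_def Y_def algebra_simps)
  also have "\<dots> \<approx> 0 * g k t * g s t + g i t * g k t * 0"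
    by (intro cg_add cg_r cg_l P0) (use assms in simp_all)
  finally show ?thesis by simp
qed

lemma Zrow: assumes "RR i" "CC j" "CC l" "CC t" "j \<noteq> l" "l \<noteq> t"
  shows "g i j * g i l * g i t \<approx> (0::'a::field_char_0 W)"
proof -
  have "g i j * g i l * g i t \<approx> g i j * (X i l + Y l i) * (g i t :: 'a W)"
    by (rule cg_lr[OF G0]) (use assms in simp_all)
  also have "\<dots> \<approx> g i j * (g i l * aa (rr i) l + aa (rr i) l * g i l) * (g i t :: 'a W)"
    by (intro cg_lr cg_add cg_sym[OF XC] cg_sym[OF YC]) (use assms in simp_all)
  also have "\<dots> = g i j * g i l * (aa (rr i) l * g i t) + (g i j * aa (rr i) l) * g i l * g i t"
    by (simp add: algebra_simps)
  also have "\<dots> \<approx> g i j * g i l * 0 + 0 * g i l * g i t"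
    by (intro cg_add cg_r cg_l P0) (use assms in simp_all)
  finally show ?thesis by simp
qed


lemma N3: assumes "RR i" "RR k" "RR s" "CC j" "CC l" "CC t"
  shows "g i j * g k l * g s t \<approx> (if j = l \<and> k = s then X i t else 0) + (if i = k \<and> l = t then Y j s else (0::'a::field_char_0 W))"
proof -
  consider (c1) "i \<noteq> k" "j \<noteq> l" | (c2) "k \<noteq> s" "l \<noteq> t" | (c3) "j = l" "k = s"
    | (c4) "i = k" "l = t" "\<not> (j = l \<and> k = s)" | (c5) "i = k" "k = s" "j \<noteq> l" "l \<noteq> t"
    | (c6) "j = l" "l = t" "i \<noteq> k" "k \<noteq> s" by blast
  then show ?thesis
  proof cases
    case c1
    have "g i j * g k l * g s t \<approx> 0 * (g s t :: 'a W)" by (rule cg_r[OF Z2]) (use assms c1 in simp_all)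
    then show ?thesis using c1 by simp
  next
    case c2
    have "g i j * g k l * g s t = g i j * (g k l * (g s t :: 'a W))" by (simp add: mult.assoc)
    also have "\<dots> \<approx> g i j * 0" by (rule cg_l[OF Z2]) (use assms c2 in simp_all)
    finally show ?thesis using c2 by simp
  next
    case c3
    show ?thesis
    proof (cases "i = k")
      case False
      show ?thesis
      proof (cases "j = t")
        case True
        have "g i j * g k l * g s t = g i t * (aa k t :: 'a W)" using c3 True by (simp add: aa_def mult.assoc)
        also have "\<dots> \<approx> X i t" by (rule XC) (use assms False in simp_all)
        finally show ?thesis using c3 False by simp
      next
        case jt: False
        have "g i j * g k j * g k t \<approx> aa i (cc t) * (g i t :: 'a W)"
          by (intro cg_sym[OF T1]) (use assms False jt c3 in simp_all)
        then show ?thesis using c3 False by (simp add: X_def)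
      qed
    next
      case True
      show ?thesis
      proof (cases "j = t")
        case jt: True
        have "g i t * g i t * g i t \<approx> (g i t :: 'a W)" by (intro cube) (use assms in simp_all)
        then have "g i j * g k l * g s t \<approx> (g i t :: 'a W)" using c3 True jt by simp
        also have "\<dots> \<approx> X i t + Y t i" by (rule G0) (use assms in simp_all)
        finally show ?thesis using c3 True jt by simp
      next
        case jt: False
        have "g i j * g k l * g s t = aa i j * (g i t :: 'a W)" using c3 True by (simp add: aa_def)
        also have "\<dots> \<approx> X i t" by (rule XR) (use assms c3 True jt in simp_all)
        finally show ?thesis using c3 True jt by simp
      qed
    qed
  next
    case c4
    show ?thesis
    proof (cases "j = t")
      case True
      then have "i \<noteq> s" using c4 by auto
      have "g i j * g k l * g s t = aa i t * (g s t :: 'a W)" using c4 True by (simp add: aa_def)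
      also have "\<dots> \<approx> Y t s" by (rule YC) (use assms \<open>i \<noteq> s\<close> in simp_all)
      finally show ?thesis using c4 True by simp
    next
      case False
      show ?thesis
      proof (cases "s = i")
        case True
        have "g i j * g k l * g s t = g i j * (aa i t :: 'a W)" using c4 True by (simp add: aa_def mult.assoc)
        also have "\<dots> \<approx> Y j i" by (rule YR) (use assms c4 False in simp_all)
        finally show ?thesis using c4 True False by simp
      next
        case si: False
        have "g i j * g i t * g s t \<approx> g s j * (aa s (cc j) :: 'a W)"
          by (intro cg_sym[OF T2]) (use assms False si c4 in simp_all)
        then show ?thesis using c4 False by (simp add: Y_def)
      qed
    qed
  next
    case c5
    have "g i j * g i l * g i t \<approx> (0 :: 'a W)" by (intro Zrow) (use assms c5 in simp_all)
    then have "g i j * g k l * g s t \<approx> (0 :: 'a W)" using c5 by simp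
    then show ?thesis using c5 by simp
  next
    case c6
    have "g i t * g k t * g s t \<approx> (0 :: 'a W)" by (intro Zcol) (use assms c6 in simp_all)
    then have "g i j * g k l * g s t \<approx> (0 :: 'a W)" using c6 by simp
    then show ?thesis using c6 by simp
  qed
qed


lemma pq_simps[simp]: "Suc 0 \<le> p" "Suc 0 \<le> q" "0 < p" "0 < q" "Suc (Suc 0) \<le> p" "Suc (Suc 0) \<le> q"
  using p2 q2 by auto

lemma cc1[simp]: "cc 1 = 2" "cc (Suc 0) = 2" by (simp_all add: cc_def)
lemma rr1[simp]: "rr 1 = 2" "rr (Suc 0) = 2" by (simp_all add: rr_def)

lemma cg_if: "(P \<Longrightarrow> x \<approx> y) \<Longrightarrow> (if P then x else 0) \<approx> (if P then y else 0)"
  by (cases P) simp_all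

lemma E3: assumes "RR m" "CC v" "CC t"
  shows "g m v * X m t \<approx> Y v m * (g m t :: 'a::field_char_0 W)"
proof -
  have "g m v * X m t = (g m v * g m (cc t) * g m (cc t)) * (g m t :: 'a W)" by (simp add: X_def aa_def mult.assoc)
  also have "\<dots> \<approx> ((if v = cc t \<and> m = m then X m (cc t) else 0) + (if m = m \<and> cc t = cc t then Y v m else 0)) * g m t"
    by (rule cg_r[OF N3]) (use assms in simp_all)
  also have "\<dots> = (if v = cc t then X m (cc t) * g m t else 0) + Y v m * g m t" by (simp add: distrib_right)
  also have "\<dots> \<approx> 0 + Y v m * g m t"
  proof (rule cg_add)
    show "(if v = cc t then X m (cc t) * g m t else 0) \<approx> (0 :: 'a W)"
    proof (cases "v = cc t")
      case True
      have "X m (cc t) * g m t \<approx> g m (cc t) * aa (rr m) (cc t) * (g m t :: 'a W)"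
        by (rule cg_r[OF cg_sym[OF XC]]) (use assms in simp_all)
      also have "\<dots> = g m (cc t) * (aa (rr m) (cc t) * g m t)" by (simp add: mult.assoc)
      also have "\<dots> \<approx> g m (cc t) * 0" by (rule cg_l[OF P0(1)]) (use assms in simp_all)
      finally show ?thesis using True by simp
    qed simp
  qed simp
  finally show ?thesis by simp
qed

lemma E4: assumes "RR k" "RR m" "CC v" "CC t" "k \<noteq> m"
  shows "Y v k * g k t \<approx> g m v * (X m t :: 'a::field_char_0 W)"
proof -
  have "Y v k * g k t \<approx> aa m v * g k v * (g k t :: 'a W)"
    by (rule cg_r[OF cg_sym[OF YC]]) (use assms in simp_all)
  also have "\<dots> = g m v * (g m v * g k v * g k t)" by (simp add: aa_def mult.assoc)
  also have "\<dots> \<approx> g m v * ((if v = v \<and> k = k then X m t else 0) + (if m = k \<and> v = t then Y v k else 0))"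
    by (rule cg_l[OF N3]) (use assms in simp_all)
  also have "\<dots> = g m v * X m t" using assms by simp
  finally show ?thesis .
qed

lemma Eind: assumes "RR k" "CC v" "CC t"
  shows "Y v k * g k t \<approx> Y v 1 * (g 1 t :: 'a::field_char_0 W)"
proof (cases "k = 1")
  case False
  have "Y v k * g k t \<approx> g 1 v * (X 1 t :: 'a W)" by (rule E4) (use assms False in simp_all)
  also have "\<dots> \<approx> Y v 1 * g 1 t" by (rule E3) (use assms in simp_all)
  finally show ?thesis .
qed simp

lemma F4a: assumes "RR i" "RR k" "CC t" "CC w" "w \<noteq> t"
  shows "X i t * g k t \<approx> g i w * (Y w k :: 'a::field_char_0 W)"
proof -
  have "X i t * g k t \<approx> aa i w * g i t * (g k t :: 'a W)"
    by (rule cg_r[OF cg_sym[OF XR]]) (use assms in simp_all)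
  also have "\<dots> = g i w * (g i w * g i t * g k t)" by (simp add: aa_def mult.assoc)
  also have "\<dots> \<approx> g i w * ((if w = t \<and> i = k then X i t else 0) + (if i = i \<and> t = t then Y w k else 0))"
    by (rule cg_l[OF N3]) (use assms in simp_all)
  also have "\<dots> = g i w * Y w k" using assms by simp
  finally show ?thesis .
qed

lemma F5: assumes "RR i" "RR k" "CC w"
  shows "g i w * Y w k \<approx> X i w * (g k w :: 'a::field_char_0 W)"
proof -
  have "g i w * Y w k \<approx> g i w * (aa (rr k) w * (g k w :: 'a W))"
    by (rule cg_l[OF cg_sym[OF YC]]) (use assms in simp_all)
  also have "\<dots> = (g i w * g (rr k) w * g (rr k) w) * g k w" by (simp add: aa_def mult.assoc)
  also have "\<dots> \<approx> ((if w = w \<and> rr k = rr k then X i w else 0) + (if i = rr k \<and> w = w then Y w (rr k) else 0)) * g k w"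
    by (rule cg_r[OF N3]) (use assms in simp_all)
  also have "\<dots> = X i w * g k w + (if i = rr k then Y w i * g k w else 0)" by (simp add: distrib_right)
  also have "\<dots> \<approx> X i w * g k w + 0"
  proof (rule cg_add)
    show "(if i = rr k then Y w i * g k w else 0) \<approx> (0 :: 'a W)"
    proof (cases "i = rr k")
      case True
      have "Y w i * g k w = g i w * (aa i (cc w) * (g k w :: 'a W))" by (simp add: Y_def mult.assoc)
      also have "\<dots> \<approx> g i w * 0" by (rule cg_l[OF P0(1)]) (use assms True in simp_all)
      finally show ?thesis using True by simp
    qed simp
  qed simp
  finally show ?thesis by simp
qed

lemma Find: assumes "RR i" "RR k" "CC t"
  shows "X i t * g k t \<approx> X i 1 * (g k 1 :: 'a::field_char_0 W)"
proof (cases "t = 1")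
  case False
  have "X i t * g k t \<approx> g i 1 * (Y 1 k :: 'a W)" by (rule F4a) (use assms False in simp_all)
  also have "\<dots> \<approx> X i 1 * g k 1" by (rule F5) (use assms in simp_all)
  finally show ?thesis .
qed simp

lemma aX: assumes "RR u" "CC t" "CC c"
  shows "aa u c * X u t \<approx> (X u t :: 'a::field_char_0 W)"
proof (cases "c = t")
  case True
  have "aa u c * X u t \<approx> aa u c * (g u t * (aa (rr u) t :: 'a W))"
    by (intro cg_l[OF cg_sym[OF XC]]) (use assms in simp_all)
  also have "\<dots> = (g u t * g u t * g u t) * aa (rr u) t" using True by (simp add: aa_def mult.assoc)
  also have "\<dots> \<approx> g u t * aa (rr u) t" by (rule cg_r[OF cube]) (use assms in simp_all)
  also have "\<dots> \<approx> X u t" by (rule XC) (use assms in simp_all)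
  finally show ?thesis .
next
  case False
  have "aa u c * X u t \<approx> aa u c * (aa u c * (g u t :: 'a W))"
    by (intro cg_l[OF cg_sym[OF XR]]) (use assms False in simp_all)
  also have "\<dots> = (aa u c * aa u c) * g u t" by (simp add: mult.assoc)
  also have "\<dots> \<approx> aa u c * g u t" by (rule cg_r[OF idem]) (use assms in simp_all)
  also have "\<dots> \<approx> X u t" by (rule XR) (use assms False in simp_all)
  finally show ?thesis .
qed

lemma aY: assumes "RR m" "RR k" "CC v"
  shows "aa m v * Y v k \<approx> (Y v k :: 'a::field_char_0 W)"
proof (cases "m = k")
  case True
  have "aa m v * Y v k = (g k v * g k v * g k v) * (aa k (cc v) :: 'a W)" using True by (simp add: aa_def Y_def mult.assoc)
  also have "\<dots> \<approx> g k v * aa k (cc v)" by (rule cg_r[OF cube]) (use assms in simp_all)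
  finally show ?thesis by (simp add: Y_def)
next
  case False
  have "aa m v * Y v k \<approx> aa m v * (aa m v * (g k v :: 'a W))"
    by (intro cg_l[OF cg_sym[OF YC]]) (use assms False in simp_all)
  also have "\<dots> = (aa m v * aa m v) * g k v" by (simp add: mult.assoc)
  also have "\<dots> \<approx> aa m v * g k v" by (rule cg_r[OF idem]) (use assms in simp_all)
  also have "\<dots> \<approx> Y v k" by (rule YC) (use assms False in simp_all)
  finally show ?thesis .
qed

lemma LX: assumes "RR u" "CC v" "RR i" "CC t"
  shows "g u v * X i t \<approx> (if u = i then Y v 1 * g 1 t else (0::'a::field_char_0 W))"
proof -
  have "g u v * X i t \<approx> g u v * (g i t * (aa (rr i) t :: 'a W))"
    by (rule cg_l[OF cg_sym[OF XC]]) (use assms in simp_all)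
  also have "\<dots> = (g u v * g i t * g (rr i) t) * g (rr i) t" by (simp add: aa_def mult.assoc)
  also have "\<dots> \<approx> ((if v = t \<and> i = rr i then X u t else 0) + (if u = i \<and> t = t then Y v (rr i) else 0)) * g (rr i) t"
    by (rule cg_r[OF N3]) (use assms in simp_all)
  also have "\<dots> = (if u = i then Y v (rr i) * g (rr i) t else 0)" by simp
  also have "\<dots> \<approx> (if u = i then Y v 1 * g 1 t else 0)"
    by (rule cg_if, rule Eind) (use assms in simp_all)
  finally show ?thesis .
qed

lemma LY: assumes "RR u" "CC v" "RR i" "CC t"
  shows "g u v * Y t i \<approx> (if v = t then X u 1 * g i 1 else (0::'a::field_char_0 W))"
proof -
  have "g u v * Y t i = (g u v * g i t * g i (cc t)) * (g i (cc t) :: 'a W)" by (simp add: Y_def aa_def mult.assoc)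
  also have "\<dots> \<approx> ((if v = t \<and> i = i then X u (cc t) else 0) + (if u = i \<and> t = cc t then Y v i else 0)) * g i (cc t)"
    by (rule cg_r[OF N3]) (use assms in simp_all)
  also have "\<dots> = (if v = t then X u (cc t) * g i (cc t) else 0)" by simp
  also have "\<dots> \<approx> (if v = t then X u 1 * g i 1 else 0)"
    by (rule cg_if, rule Find) (use assms in simp_all)
  finally show ?thesis .
qed


lemma H1: assumes "RR k" "CC v"
  shows "Y v 1 * g 1 1 * g k 1 \<approx> (Y v k :: 'a::field_char_0 W)"
proof -
  have "Y v 1 * g 1 1 * g k 1 \<approx> aa 2 v * g 1 v * g 1 1 * (g k 1 :: 'a W)"
    by (intro cg_r cg_sym[OF YC]) (use assms in simp_all)
  also have "\<dots> = aa 2 v * (g 1 v * g 1 1 * g k 1)" by (simp add: mult.assoc)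
  also have "\<dots> \<approx> aa 2 v * ((if v = 1 \<and> 1 = k then X 1 1 else 0) + (if (1::nat) = 1 \<and> (1::nat) = 1 then Y v k else 0))"
    by (rule cg_l[OF N3]) (use assms in simp_all)
  also have "\<dots> = (if v = 1 \<and> k = 1 then aa 2 1 * X 1 1 else 0) + aa 2 v * Y v k" by (auto simp: distrib_left)
  also have "\<dots> \<approx> 0 + Y v k"
  proof (rule cg_add)
    show "(if v = 1 \<and> k = 1 then aa 2 1 * X 1 1 else 0) \<approx> (0 :: 'a W)"
    proof -
      have "aa 2 1 * X 1 1 = aa 2 1 * aa 1 2 * (g 1 1 :: 'a W)" by (simp add: X_def mult.assoc)
      also have "\<dots> \<approx> 0 * g 1 1" by (rule cg_r[OF Zaa]) simp_all
      finally show ?thesis by simp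
    qed
    show "aa 2 v * Y v k \<approx> Y v k" by (rule aY) (use assms in simp_all)
  qed
  finally show ?thesis by simp
qed

lemma H2: assumes "RR u" "CC t"
  shows "X u 1 * g 1 1 * g 1 t \<approx> (X u t :: 'a::field_char_0 W)"
proof -
  have "X u 1 * g 1 1 * g 1 t = aa u (cc 1) * (g u 1 * g 1 1 * (g 1 t :: 'a W))" by (simp only: X_def mult.assoc)
  also have "\<dots> = aa u 2 * (g u 1 * g 1 1 * (g 1 t :: 'a W))" by (simp only: cc1)
  also have "\<dots> \<approx> aa u 2 * ((if (1::nat) = 1 \<and> (1::nat) = 1 then X u t else 0) + (if u = 1 \<and> 1 = t then Y 1 1 else 0))"
    by (rule cg_l[OF N3]) (use assms in simp_all)
  also have "\<dots> = aa u 2 * X u t + (if u = 1 \<and> t = 1 then aa 1 2 * Y 1 1 else 0)" by (auto simp: distrib_left)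
  also have "\<dots> \<approx> X u t + 0"
  proof (rule cg_add)
    show "aa u 2 * X u t \<approx> X u t" by (rule aX) (use assms in simp_all)
    show "(if u = 1 \<and> t = 1 then aa 1 2 * Y 1 1 else 0) \<approx> (0 :: 'a W)"
    proof -
      have "aa 1 2 * Y 1 1 \<approx> aa 1 2 * (aa 2 1 * (g 1 1 :: 'a W))"
        by (rule cg_l[OF cg_sym[OF YC]]) simp_all
      also have "\<dots> = (aa 1 2 * aa 2 1) * g 1 1" by (simp add: mult.assoc)
      also have "\<dots> \<approx> 0 * g 1 1" by (rule cg_r[OF Zaa]) simp_all
      finally show ?thesis by simp
    qed
  qed
  finally show ?thesis by simp
qed

lemma LE: assumes "RR u" "CC v" "RR i" "RR k"
  shows "g u v * (X i 1 * g k 1) \<approx> (if u = i then Y v k else (0::'a::field_char_0 W))"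
proof -
  have "g u v * (X i 1 * g k 1) = (g u v * X i 1) * (g k 1 :: 'a W)" by (simp add: mult.assoc)
  also have "\<dots> \<approx> (if u = i then Y v 1 * g 1 1 else 0) * g k 1" by (rule cg_r[OF LX]) (use assms in simp_all)
  also have "\<dots> = (if u = i then Y v 1 * g 1 1 * g k 1 else 0)" by simp
  also have "\<dots> \<approx> (if u = i then Y v k else 0)" by (rule cg_if, rule H1) (use assms in simp_all)
  finally show ?thesis .
qed

lemma LF: assumes "RR u" "CC v" "CC j" "CC t"
  shows "g u v * (Y j 1 * g 1 t) \<approx> (if v = j then X u t else (0::'a::field_char_0 W))"
proof -
  have "g u v * (Y j 1 * g 1 t) = (g u v * Y j 1) * (g 1 t :: 'a W)" by (simp add: mult.assoc)
  also have "\<dots> \<approx> (if v = j then X u 1 * g 1 1 else 0) * g 1 t" by (rule cg_r[OF LY]) (use assms in simp_all)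
  also have "\<dots> = (if v = j then X u 1 * g 1 1 * g 1 t else 0)" by simp
  also have "\<dots> \<approx> (if v = j then X u t else 0)" by (rule cg_if, rule H2) (use assms in simp_all)
  finally show ?thesis .
qed


definition e :: "nat \<Rightarrow> nat \<Rightarrow> 'a::field_char_0 W" where
  "e a b = (if a \<le> p then (if b \<le> p then X a 1 * g b 1 else X a (b - p))
            else (if b \<le> p then Y (a - p) b else Y (a - p) 1 * g 1 (b - p)))"

lemma inF_e[simp]: "inF (e a b)" by (simp add: e_def)

lemma Lrule: assumes "RR u" "CC v" "a \<in> {1..p+q}" "b \<in> {1..p+q}"
  shows "g u v * e a b \<approx> (if a = p + v then e u b else 0) + (if a = u then e (p + v) b else (0::'a::field_char_0 W))"
proof (cases "a \<le> p")
  case True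
  note a = True
  show ?thesis
  proof (cases "b \<le> p")
    case True
    have "g u v * e a b = g u v * (X a 1 * (g b 1 :: 'a W))" using a True by (simp add: e_def)
    also have "\<dots> \<approx> (if u = a then Y v b else 0)" by (rule LE) (use assms a True in auto)
    finally show ?thesis using a True assms by (auto simp: e_def)
  next
    case False
    have "g u v * e a b = g u v * (X a (b - p) :: 'a W)" using a False by (simp add: e_def)
    also have "\<dots> \<approx> (if u = a then Y v 1 * g 1 (b - p) else 0)" by (rule LX) (use assms a False in auto)
    finally show ?thesis using a False assms by (auto simp: e_def)
  qed
next
  case False
  note a = False
  show ?thesis
  proof (cases "b \<le> p")
    case True
    have "g u v * e a b = g u v * (Y (a - p) b :: 'a W)" using a True by (simp add: e_def)
    also have "\<dots> \<approx> (if v = a - p then X u 1 * g b 1 else 0)" by (rule LY) (use assms a True in auto)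
    moreover have "(v = a - p) = (a = p + v)" using a by arith
    ultimately show ?thesis using a True assms by (auto simp: e_def)
  next
    case False
    have "g u v * e a b = g u v * (Y (a - p) 1 * (g 1 (b - p) :: 'a W))" using a False by (simp add: e_def)
    also have "\<dots> \<approx> (if v = a - p then X u (b - p) else 0)" by (rule LF) (use assms a False in auto)
    moreover have "(v = a - p) = (a = p + v)" using a by arith
    ultimately show ?thesis using a False assms by (auto simp: e_def)
  qed
qed

lemma Grule: assumes "RR i" "CC j"
  shows "g i j \<approx> e i (p + j) + (e (p + j) i :: 'a::field_char_0 W)"
proof -
  have "e i (p + j) + e (p + j) i = X i j + (Y j i :: 'a W)" using assms by (simp add: e_def)
  then show ?thesis using G0[OF assms] by simp
qed

end


definition rho :: "nat \<Rightarrow> nat \<times> nat \<Rightarrow> (nat \<Rightarrow> 'a::field) \<Rightarrow> nat \<Rightarrow> 'a" where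
  "rho p x v = (\<lambda>c. if c = fst x then v (p + snd x) else if c = p + snd x then v (fst x) else 0)"

fun actw :: "nat \<Rightarrow> (nat \<times> nat) list \<Rightarrow> (nat \<Rightarrow> 'a::field) \<Rightarrow> nat \<Rightarrow> 'a" where
  "actw p [] v = v"
| "actw p (x # w) v = rho p x (actw p w v)"

definition act :: "nat \<Rightarrow> ((nat \<times> nat) list \<Rightarrow> 'a::field) \<Rightarrow> (nat \<Rightarrow> 'a) \<Rightarrow> nat \<Rightarrow> 'a" where
  "act p f v = (\<lambda>c. \<Sum>w\<in>{w. f w \<noteq> 0}. f w * actw p w v c)"

lemma rho_add: "rho p x (\<lambda>c. V c + U c) = (\<lambda>c. rho p x V c + rho p x U c)"
  by (auto simp: rho_def)
lemma rho_smult: "rho p x (\<lambda>c. a * V c) = (\<lambda>c. a * rho p x V c)"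
  by (auto simp: rho_def)
lemma rho_zero: "rho p x (\<lambda>c. 0) = (\<lambda>c. 0)"
  by (auto simp: rho_def)

lemma actw_add: "actw p w (\<lambda>c. V c + U c) = (\<lambda>c. actw p w V c + actw p w U c)"
  by (induction w) (auto simp: rho_add)
lemma actw_smult: "actw p w (\<lambda>c. a * V c) = (\<lambda>c. a * actw p w V c)"
  by (induction w) (auto simp: rho_smult)
lemma actw_zero: "actw p w (\<lambda>c. 0) = (\<lambda>c. 0)"
  by (induction w) (auto simp: rho_zero)

lemma actw_sum: "finite K \<Longrightarrow> actw p w (\<lambda>c. \<Sum>k\<in>K. a k * V k c) = (\<lambda>c. \<Sum>k\<in>K. a k * actw p w (V k) c)"
proof (induction K rule: finite_induct)
  case empty
  then show ?case by (simp add: actw_zero)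
next
  case (insert k K)
  have "actw p w (\<lambda>c. \<Sum>k\<in>insert k K. a k * V k c) = actw p w (\<lambda>c. a k * V k c + (\<Sum>k\<in>K. a k * V k c))"
    using insert by simp
  also have "\<dots> = (\<lambda>c. a k * actw p w (V k) c + (\<Sum>k\<in>K. a k * actw p w (V k) c))"
    by (simp add: actw_add actw_smult insert.IH)
  finally show ?case using insert by simp
qed

lemma actw_append: "actw p (u @ w) v = actw p u (actw p w v)"
  by (induction u) auto

lemma act_super:
  assumes "finite S" "{w. f w \<noteq> 0} \<subseteq> S"
  shows "act p f v c = (\<Sum>w\<in>S. f w * actw p w v c)"
  unfolding act_def using assms by (intro sum.mono_neutral_left) auto

lemma act_fadd:
  assumes "finite {w. f w \<noteq> 0}" "finite {w. g w \<noteq> 0}"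
  shows "act p (fadd f g) v c = act p f v c + act p g v c"
proof -
  let ?S = "{w. f w \<noteq> 0} \<union> {w. g w \<noteq> 0}"
  have "act p (fadd f g) v c = (\<Sum>w\<in>?S. fadd f g w * actw p w v c)"
    by (rule act_super) (use assms in \<open>auto simp: fadd_def\<close>)
  also have "\<dots> = (\<Sum>w\<in>?S. f w * actw p w v c) + (\<Sum>w\<in>?S. g w * actw p w v c)"
    by (simp add: fadd_def distrib_right sum.distrib)
  also have "\<dots> = act p f v c + act p g v c"
  proof -
    have "act p f v c = (\<Sum>w\<in>?S. f w * actw p w v c)" by (rule act_super) (use assms in auto)
    moreover have "act p g v c = (\<Sum>w\<in>?S. g w * actw p w v c)" by (rule act_super) (use assms in auto)
    ultimately show ?thesis by simp
  qed
  finally show ?thesis .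
qed

lemma act_fsmult:
  assumes "finite {w. f w \<noteq> 0}"
  shows "act p (fsmult k f) v c = k * act p f v c"
proof -
  have "act p (fsmult k f) v c = (\<Sum>w\<in>{w. f w \<noteq> 0}. fsmult k f w * actw p w v c)"
    by (rule act_super) (use assms in \<open>auto simp: fsmult_def\<close>)
  also have "\<dots> = k * act p f v c" by (simp add: act_def fsmult_def sum_distrib_left mult.assoc)
  finally show ?thesis .
qed

lemma act_fzero: "act p fzero v c = 0"
  by (simp add: act_def fzero_def)

lemma act_fsub:
  assumes "finite {w. f w \<noteq> 0}" "finite {w. g w \<noteq> 0}"
  shows "act p (fsub f g) v c = act p f v c - act p g v c"
proof -
  have "finite {w. fsmult (-1) g w \<noteq> 0}" using assms(2) by (rule rev_finite_subset) (auto simp: fsmult_def)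
  then show ?thesis using assms by (simp add: fsub_eq act_fadd act_fsmult)
qed

lemma act_smult_v: "act p f (\<lambda>c. a * V c) c' = a * act p f V c'"
  by (simp add: act_def actw_smult sum_distrib_left algebra_simps)

lemma act_zero_v: "act p f (\<lambda>c. 0) c' = 0"
  by (simp add: act_def actw_zero)

lemma act_G: "act p (G i j) v = rho p (i, j) v"
proof -
  have "{w. G i j w \<noteq> (0::'a)} = {[(i,j)]}" by (auto simp: G_def)
  then show ?thesis by (simp add: act_def G_def fun_eq_iff)
qed

lemma fmul_split:
  assumes "finite Sf" "finite Sg" "{w. f w \<noteq> 0} \<subseteq> Sf" "{w. g w \<noteq> 0} \<subseteq> Sg"
  shows "fmul f g x = (\<Sum>pr\<in>{pr \<in> Sf \<times> Sg. fst pr @ snd pr = x}. f (fst pr) * g (snd pr))"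
proof -
  let ?K = "{k \<in> {0..length x}. (take k x, drop k x) \<in> Sf \<times> Sg}"
  have "fmul f g x = (\<Sum>k\<in>?K. f (take k x) * g (drop k x))"
    unfolding fmul_def using assms by (intro sum.mono_neutral_right) auto
  also have "\<dots> = (\<Sum>pr\<in>{pr \<in> Sf \<times> Sg. fst pr @ snd pr = x}. f (fst pr) * g (snd pr))"
    by (rule sum.reindex_bij_witness[where i="\<lambda>pr. length (fst pr)" and j="\<lambda>k. (take k x, drop k x)"])
       auto
  finally show ?thesis .
qed

lemma act_fmul:
  assumes "finite {w. f w \<noteq> 0}" "finite {w. g w \<noteq> 0}"
  shows "act p (fmul f g) v c = act p f (act p g v) c"
proof -
  define Sf where "Sf = {w. f w \<noteq> 0}"
  define Sg where "Sg = {w. g w \<noteq> 0}"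
  define S where "S = (\<lambda>pr. fst pr @ snd pr) ` (Sf \<times> Sg)"
  have fin: "finite Sf" "finite Sg" "finite S" using assms by (auto simp: Sf_def Sg_def S_def)
  have supp: "{w. fmul f g w \<noteq> 0} \<subseteq> S"
  proof
    fix x assume "x \<in> {w. fmul f g w \<noteq> 0}"
    then obtain u w where "x = u @ w" "f u \<noteq> 0" "g w \<noteq> 0" using fmul_support by blast
    then show "x \<in> S" unfolding S_def Sf_def Sg_def by (intro rev_image_eqI[of "(u, w)"]) auto
  qed
  have "act p (fmul f g) v c = (\<Sum>x\<in>S. fmul f g x * actw p x v c)"
    by (rule act_super[OF fin(3) supp])
  also have "\<dots> = (\<Sum>x\<in>S. \<Sum>pr\<in>{pr \<in> Sf \<times> Sg. fst pr @ snd pr = x}. f (fst pr) * g (snd pr) * actw p (fst pr @ snd pr) v c)"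
    by (intro sum.cong refl) (simp add: fmul_split[OF fin(1,2)] Sf_def Sg_def sum_distrib_right)
  also have "\<dots> = (\<Sum>pr\<in>Sf \<times> Sg. f (fst pr) * g (snd pr) * actw p (fst pr @ snd pr) v c)"
    by (rule sum.group) (use fin in \<open>auto simp: S_def\<close>)
  also have "\<dots> = (\<Sum>u\<in>Sf. \<Sum>w\<in>Sg. f u * g w * actw p (u @ w) v c)"
    by (simp add: sum.cartesian_product case_prod_beta)
  also have "\<dots> = (\<Sum>u\<in>Sf. f u * actw p u (\<lambda>c. \<Sum>w\<in>Sg. g w * actw p w v c) c)"
    by (simp add: actw_sum fin actw_append sum_distrib_left mult.assoc)
  also have "\<dots> = act p f (act p g v) c"
    by (simp add: act_def Sf_def Sg_def)
  finally show ?thesis .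
qed


lemma freealg_fin: "f \<in> freealg p q \<Longrightarrow> finite {w. f w \<noteq> 0}"
  by (simp add: freealg_def)

lemma rho_triple:
  assumes "i \<in> {1..p}" "k \<in> {1..p}" "s \<in> {1..p}" "j \<in> {1..q}" "l \<in> {1..q}" "t \<in> {1..q}"
  shows "rho p (i,j) (rho p (k,l) (rho p (s,t) v)) c + rho p (s,t) (rho p (k,l) (rho p (i,j) v)) c =
    (if j = l \<and> k = s then rho p (i,t) v c else 0) + (if l = t \<and> k = i then rho p (s,j) v c else (0::'a::field))"
  using assms by (auto simp: rho_def)

lemma act_fmul_fun:
  assumes "finite {w. f w \<noteq> 0}" "finite {w. g w \<noteq> 0}"
  shows "act p (fmul f g) v = act p f (act p g v)"
  using act_fmul[OF assms] by (simp add: fun_eq_iff)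

lemma act_envrels:
  assumes "x \<in> envrels p q"
  shows "act p x v c = (0::'a::field)"
proof -
  from assms obtain i j k l s t where r: "i \<in> {1..p}" "j \<in> {1..q}" "k \<in> {1..p}" "l \<in> {1..q}" "s \<in> {1..p}" "t \<in> {1..q}"
    and x: "x = fsub (fadd (fmul (fmul (G i j) (G k l)) (G s t)) (fmul (fmul (G s t) (G k l)) (G i j)))
                        (Phi p q (jtriple p q (matunit i j) (matunit k l) (matunit s t)))"
    unfolding envrels_def by blast
  have phi: "Phi p q (jtriple p q (matunit i j) (matunit k l) (matunit s t)) =
      fadd (if j = l \<and> k = s then G i t else fzero) (if l = t \<and> k = i then G s j else (fzero :: _ \<Rightarrow> 'a))"
    using r by (simp add: jtriple_units eq_commute[of t l] Phi_units)
  have fG: "\<And>a b. a \<in> {1..p} \<Longrightarrow> b \<in> {1..q} \<Longrightarrow> finite {w. G a b w \<noteq> (0::'a)}"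
    by (intro freealg_fin G_freealg) auto
  have fGG: "\<And>a b a' b'. a \<in> {1..p} \<Longrightarrow> b \<in> {1..q} \<Longrightarrow> a' \<in> {1..p} \<Longrightarrow> b' \<in> {1..q} \<Longrightarrow> finite {w. fmul (G a b) (G a' b') w \<noteq> (0::'a)}"
    by (intro freealg_fin freealg_fmul G_freealg) auto
  have fGGG: "\<And>a b a' b' a'' b''. a \<in> {1..p} \<Longrightarrow> b \<in> {1..q} \<Longrightarrow> a' \<in> {1..p} \<Longrightarrow> b' \<in> {1..q} \<Longrightarrow> a'' \<in> {1..p} \<Longrightarrow> b'' \<in> {1..q} \<Longrightarrow> finite {w. fmul (fmul (G a b) (G a' b')) (G a'' b'') w \<noteq> (0::'a)}"
    by (intro freealg_fin freealg_fmul G_freealg) auto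
  have fif: "\<And>P a b. a \<in> {1..p} \<Longrightarrow> b \<in> {1..q} \<Longrightarrow> finite {w. (if P then G a b else fzero) w \<noteq> (0::'a)}"
    using fG by (auto simp: fzero_def)
  have fsum: "finite {w. fadd (fmul (fmul (G i j) (G k l)) (G s t)) (fmul (fmul (G s t) (G k l)) (G i j)) w \<noteq> (0::'a)}"
    using r by (intro freealg_fin freealg_fadd freealg_fmul G_freealg) auto
  have fphi: "finite {w. fadd (if j = l \<and> k = s then G i t else fzero) (if l = t \<and> k = i then G s j else (fzero :: _ \<Rightarrow> 'a)) w \<noteq> 0}"
    using r by (intro freealg_fin freealg_fadd) (auto intro: G_freealg freealg_fzero)
  have aif: "\<And>P a b. act p (if P then G a b else fzero) v c = (if P then rho p (a, b) v c else (0::'a))"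
    by (simp add: act_G act_fzero)
  have "act p x v c = (act p (fmul (fmul (G i j) (G k l)) (G s t)) v c + act p (fmul (fmul (G s t) (G k l)) (G i j)) v c)
        - (act p (if j = l \<and> k = s then G i t else fzero) v c + act p (if l = t \<and> k = i then G s j else fzero) v c)"
    unfolding x phi using r
    by (simp add: act_fsub fsum fphi act_fadd fGGG fif del: if_split_asm split del: if_split)
  also have "\<dots> = (rho p (i,j) (rho p (k,l) (rho p (s,t) v)) c + rho p (s,t) (rho p (k,l) (rho p (i,j) v)) c)
        - ((if j = l \<and> k = s then rho p (i,t) v c else 0) + (if l = t \<and> k = i then rho p (s,j) v c else 0))"
    using r by (simp add: act_fmul_fun fGG fG act_G aif del: if_split_asm split del: if_split)
  also have "\<dots> = 0" by (simp only: rho_triple[OF r(1,3,5,2,4,6)] diff_self)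
  finally show ?thesis .
qed

lemma act_envideal:
  assumes "x \<in> ideal_gen p q (envrels p q)"
  shows "\<forall>v c. act p x v c = (0::'a::field)"
  using assms
proof (induction rule: ideal_gen.induct)
  case (base s)
  then show ?case by (auto intro: act_envrels)
next
  case zero
  then show ?case by (simp add: act_fzero)
next
  case (add x y)
  have "finite {w. x w \<noteq> 0}" "finite {w. y w \<noteq> 0}"
    using add.hyps by (auto intro: freealg_fin envideal_freealg)
  then show ?case using add.IH by (simp add: act_fadd)
next
  case (smult x c)
  have "finite {w. x w \<noteq> 0}"
    using smult.hyps by (auto intro: freealg_fin envideal_freealg)
  then show ?case using smult.IH by (simp add: act_fsmult)
next
  case (lmul a x)
  have "finite {w. x w \<noteq> 0}" "finite {w. a w \<noteq> 0}"
    using lmul.hyps by (auto intro: freealg_fin envideal_freealg)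
  moreover have "\<And>v. act p x v = (\<lambda>c. 0)" using lmul.IH by (simp add: fun_eq_iff)
  ultimately show ?case by (simp add: act_fmul act_zero_v)
next
  case (rmul a x)
  have "finite {w. x w \<noteq> 0}" "finite {w. a w \<noteq> 0}"
    using rmul.hyps by (auto intro: freealg_fin envideal_freealg)
  then show ?case using rmul.IH by (simp add: act_fmul)
qed


context env
begin

definition actW :: "'a::field_char_0 W \<Rightarrow> (nat \<Rightarrow> 'a) \<Rightarrow> nat \<Rightarrow> 'a" where
  "actW x = act p (Rep_W x)"

lemma inF_fin: "inF x \<Longrightarrow> finite {w. Rep_W x w \<noteq> 0}"
  by (simp add: inF_def freealg_fin)

lemma actW_mult: "inF x \<Longrightarrow> inF y \<Longrightarrow> actW (x * y) v = actW x (actW y v)"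
  unfolding actW_def by (simp add: Rep_times act_fmul_fun inF_fin)

lemma actW_g: "RR i \<Longrightarrow> CC j \<Longrightarrow> actW (g i j) v = rho p (i, j) v"
  unfolding actW_def by (simp add: Rep_g act_G)

lemma actW_e: assumes "a \<in> {1..p+q}" "b \<in> {1..p+q}"
  shows "actW (e b a :: 'a::field_char_0 W) v c = (if c = b then v a else 0)"
proof -
  consider "b \<le> p" "a \<le> p" | "b \<le> p" "\<not> a \<le> p" | "\<not> b \<le> p" "a \<le> p" | "\<not> b \<le> p" "\<not> a \<le> p" by blast
  then show ?thesis
  proof cases
    case 1
    then show ?thesis using assms
      by (simp add: e_def X_def aa_def actW_mult actW_g) (auto simp: rho_def)
  next
    case 2
    then have "1 \<le> a - p" "a - p \<le> q" "p + cc (a - p) \<noteq> a"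
      using assms apply auto using cc_neq(1)[of "a - p"] by linarith
    then show ?thesis using assms 2
      by (simp add: e_def X_def aa_def actW_mult actW_g) (auto simp: rho_def)
  next
    case 3
    then have "1 \<le> b - p" "b - p \<le> q" "p + cc (b - p) \<noteq> b"
      using assms apply auto using cc_neq(1)[of "b - p"] by linarith
    then show ?thesis using assms 3
      by (simp add: e_def Y_def aa_def actW_mult actW_g) (auto simp: rho_def)
  next
    case 4
    then have "1 \<le> b - p" "b - p \<le> q" "1 \<le> a - p" "a - p \<le> q" "p + cc (a - p) \<noteq> a" "p + cc (b - p) \<noteq> b"
      using assms apply auto using cc_neq(1)[of "a - p"] cc_neq(1)[of "b - p"] by linarith+
    then show ?thesis using assms 4
      by (simp add: e_def Y_def aa_def actW_mult actW_g) (auto simp: rho_def)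
  qed
qed

end


lemma fmul_G_delta: "fmul (G i j) (\<lambda>u. if u = w then 1 else 0) = (\<lambda>u. if u = (i,j) # w then (1::'a::field) else 0)"
proof (rule ext)
  fix u :: "(nat \<times> nat) list"
  have "fmul (G i j) (\<lambda>u. if u = w then 1 else 0) u = (\<Sum>k\<in>{0..length u}. if k = 1 then (if u = (i,j) # w then (1::'a) else 0) else 0)"
    unfolding fmul_def
  proof (rule sum.cong[OF refl])
    fix k assume k: "k \<in> {0..length u}"
    show "G i j (take k u) * (if drop k u = w then 1 else 0) = (if k = 1 then (if u = (i,j) # w then (1::'a) else 0) else 0)"
    proof (cases "k = 1")
      case True
      then show ?thesis by (cases u) (auto simp: G_def)
    next
      case False
      have "take k u \<noteq> [(i,j)]"
      proof
        assume "take k u = [(i,j)]"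
        then have "length (take k u) = 1" by simp
        then show False using k False by auto
      qed
      then show ?thesis using False by (simp add: G_def)
    qed
  qed
  also have "\<dots> = (if u = (i,j) # w then 1 else 0)" by (auto simp: sum.delta')
  finally show "fmul (G i j) (\<lambda>u. if u = w then 1 else 0) u = (\<lambda>u. if u = (i,j) # w then (1::'a) else 0) u" by simp
qed

lemma Rep_sum: "Rep_W (sum f A) u = (\<Sum>x\<in>A. Rep_W (f x) u)"
  by (induction A rule: infinite_finite_induct) (auto simp: Rep_zero Rep_plus fzero_def fadd_def)

lemma sc_sum: "sc (sum f A) = (\<Sum>x\<in>A. sc (f x))"
  by (induction A rule: infinite_finite_induct) (auto simp: sc_zero sc_add)

lemma sum_if_const: "(\<Sum>b\<in>B. if P then F b else 0) = (if P then (\<Sum>b\<in>B. F b) else (0::'b::comm_monoid_add))"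
  by simp

context env
begin

definition dl :: "nat \<Rightarrow> nat \<Rightarrow> 'a::field_char_0" where "dl b = (\<lambda>c. if c = b then 1 else 0)"
definition monw :: "(nat \<times> nat) list \<Rightarrow> 'a::field_char_0 W" where "monw w = Abs_W (\<lambda>u. if u = w then 1 else 0)"
abbreviation Om :: "nat set" where "Om \<equiv> {1..p+q}"

lemma mono_single: "RR i \<Longrightarrow> CC j \<Longrightarrow> monw [(i,j)] = g i j"
  by (simp add: monw_def g_def G_def)

lemma mono_cons: "RR i \<Longrightarrow> CC j \<Longrightarrow> monw ((i,j) # w) = g i j * monw w"
proof -
  assume r: "RR i" "CC j"
  have "Rep_W (g i j * monw w) = fmul (G i j) (\<lambda>u. if u = w then 1 else 0)"
    using r by (simp add: Rep_times Rep_g monw_def)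
  also have "\<dots> = Rep_W (monw ((i,j) # w))" by (simp add: fmul_G_delta monw_def)
  finally show ?thesis by (metis Rep_W_inject)
qed

lemma dsum_delta: "x \<in> Om \<Longrightarrow> y \<in> Om \<Longrightarrow>
   (\<Sum>a\<in>Om. \<Sum>b\<in>Om. if a = x \<and> b = y then F a b else (0::'b::comm_monoid_add)) = F x y"
proof -
  assume xy: "x \<in> Om" "y \<in> Om"
  have "(\<Sum>a\<in>Om. \<Sum>b\<in>Om. if a = x \<and> b = y then F a b else (0::'b)) = (\<Sum>a\<in>Om. if a = x then F a y else 0)"
    using xy by (intro sum.cong refl) (auto simp: sum.delta' if_distrib cong: if_cong)
  also have "\<dots> = F x y" using xy by (simp add: sum.delta')
  finally show ?thesis .
qed

lemma sum_delta1: "x \<in> Om \<Longrightarrow> (\<Sum>a\<in>Om. if a = x then C else (0::'b::comm_monoid_add)) = C"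
  by (simp add: sum.delta')

lemma span_word:
  assumes "w \<noteq> []" "set w \<subseteq> gens p q"
  shows "monw w \<approx> (\<Sum>a\<in>Om. \<Sum>b\<in>Om. sc (actw p w (dl b) a) * (e a b :: 'a::field_char_0 W))"
  using assms
proof (induction w)
  case Nil
  then show ?case by simp
next
  case (Cons x w)
  obtain u v where x: "x = (u, v)" by (cases x)
  have r: "RR u" "CC v" using Cons.prems x by (auto simp: gens_def)
  have uv: "u \<in> Om" "p + v \<in> Om" "u \<noteq> p + v" using r by auto
  show ?case
  proof (cases "w = []")
    case True
    have "monw (x # w) = (g u v :: 'a W)" using True x r by (simp add: mono_single)
    also have "\<dots> \<approx> e u (p + v) + (e (p + v) u :: 'a W)" by (rule Grule) (use r in auto)
    also have "\<dots> = (\<Sum>a\<in>Om. \<Sum>b\<in>Om. if a = u \<and> b = p + v then e a b else 0) +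
                    (\<Sum>a\<in>Om. \<Sum>b\<in>Om. if a = p + v \<and> b = u then e a b else 0)"
      by (simp only: dsum_delta[OF uv(1) uv(2)] dsum_delta[OF uv(2) uv(1)])
    also have "\<dots> = (\<Sum>a\<in>Om. \<Sum>b\<in>Om. sc (actw p (x # w) (dl b) a) * e a b)"
      unfolding sum.distrib[symmetric] using True x uv
      by (intro sum.cong refl) (auto simp: rho_def dl_def sc_one sc_zero)
    finally show ?thesis .
  next
    case False
    define M where "M a b = (actw p w (dl b) a :: 'a)" for a b
    define A where "A b = sc (M (p + v) b) * (e u b :: 'a W)" for b
    define B where "B b = sc (M u b) * (e (p + v) b :: 'a W)" for b
    have IH: "monw w \<approx> (\<Sum>a\<in>Om. \<Sum>b\<in>Om. sc (M a b) * (e a b :: 'a W))"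
      using Cons.IH Cons.prems False by (simp add: M_def)
    have "monw (x # w) = g u v * monw w" using x r by (simp add: mono_cons)
    also have "\<dots> \<approx> g u v * (\<Sum>a\<in>Om. \<Sum>b\<in>Om. sc (M a b) * (e a b :: 'a W))"
      by (rule cg_l[OF IH]) simp
    also have "\<dots> = (\<Sum>a\<in>Om. \<Sum>b\<in>Om. sc (M a b) * (g u v * e a b))"
      by (simp add: sum_distrib_left sc_assoc_left)
    also have "\<dots> \<approx> (\<Sum>a\<in>Om. \<Sum>b\<in>Om. sc (M a b) * ((if a = p + v then e u b else 0) + (if a = u then e (p + v) b else 0)))"
      by (intro cg_sum cg_sc Lrule) (use r in auto)
    also have "\<dots> = (\<Sum>a\<in>Om. \<Sum>b\<in>Om. (if a = p + v then A b else 0) + (if a = u then B b else 0))"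
      by (intro sum.cong refl) (auto simp: A_def B_def distrib_left)
    also have "\<dots> = (\<Sum>b\<in>Om. A b) + (\<Sum>b\<in>Om. B b)"
      by (simp only: sum.distrib sum_if_const sum_delta1[OF uv(1)] sum_delta1[OF uv(2)] add.commute)
    also have "\<dots> = (\<Sum>a\<in>Om. \<Sum>b\<in>Om. (if a = u then A b else 0) + (if a = p + v then B b else 0))"
      by (simp only: sum.distrib sum_if_const sum_delta1[OF uv(1)] sum_delta1[OF uv(2)])
    also have "\<dots> = (\<Sum>a\<in>Om. \<Sum>b\<in>Om. sc (actw p (x # w) (dl b) a) * e a b)"
      using x uv by (intro sum.cong refl) (auto simp: A_def B_def M_def rho_def sc_zero)
    finally show ?thesis .
  qed
qed

end


context env
begin

lemma span_all:
  assumes z: "z \<in> freealg p q"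
  shows "Abs_W z \<approx> (\<Sum>a\<in>Om. \<Sum>b\<in>Om. sc (act p z (dl b) a) * (e a b :: 'a::field_char_0 W))"
proof -
  define Sz where "Sz = {w. z w \<noteq> 0}"
  have fin: "finite Sz" using z by (simp add: Sz_def freealg_fin)
  have words: "w \<noteq> [] \<and> set w \<subseteq> gens p q" if "w \<in> Sz" for w
    using z that unfolding Sz_def freealg_def by auto
  have dec: "Abs_W z = (\<Sum>w\<in>Sz. sc (z w) * monw w)"
  proof -
    have "Rep_W (\<Sum>w\<in>Sz. sc (z w) * monw w) = z"
    proof (rule ext)
      fix u
      have "Rep_W (\<Sum>w\<in>Sz. sc (z w) * monw w) u = (\<Sum>w\<in>Sz. if u = w then z w else 0)"
        by (simp add: Rep_sum Rep_sc_times fsmult_def monw_def if_distrib cong: if_cong)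
      also have "\<dots> = z u" using fin by (simp add: sum.delta Sz_def)
      finally show "Rep_W (\<Sum>w\<in>Sz. sc (z w) * monw w) u = z u" .
    qed
    then show ?thesis by (metis Rep_W_inverse)
  qed
  define m where "m w a b = (actw p w (dl b) a :: 'a)" for w a b
  have "Abs_W z \<approx> (\<Sum>w\<in>Sz. sc (z w) * (\<Sum>a\<in>Om. \<Sum>b\<in>Om. sc (m w a b) * (e a b :: 'a W)))"
    unfolding dec m_def by (intro cg_sum cg_sc span_word) (use words in auto)
  also have "\<dots> = (\<Sum>w\<in>Sz. \<Sum>a\<in>Om. \<Sum>b\<in>Om. sc (z w * m w a b) * e a b)"
    by (simp add: sum_distrib_left sc_mult mult.assoc)
  also have "\<dots> = (\<Sum>a\<in>Om. \<Sum>w\<in>Sz. \<Sum>b\<in>Om. sc (z w * m w a b) * e a b)"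
    by (rule sum.swap)
  also have "\<dots> = (\<Sum>a\<in>Om. \<Sum>b\<in>Om. \<Sum>w\<in>Sz. sc (z w * m w a b) * e a b)"
    by (intro sum.cong refl sum.swap)
  also have "\<dots> = (\<Sum>a\<in>Om. \<Sum>b\<in>Om. sc (act p z (dl b) a) * e a b)"
    by (intro sum.cong refl) (simp add: sum_distrib_right sc_sum act_def m_def Sz_def)
  finally show ?thesis .
qed

end

theorem corollary3p2:
  fixes p q :: nat
  assumes "p > 1" and "q > 1" and "p \<noteq> q"
  shows "universal_envelope_semisimple TYPE('a::field_char_0) p q"
proof -
  interpret env p q using assms by unfold_locales auto
  show ?thesis unfolding universal_envelope_semisimple_def quot_semisimple_def
  proof (intro ballI impI)
    fix z :: "(nat \<times> nat) list \<Rightarrow> 'a"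
    assume z: "z \<in> freealg p q" and rad: "in_quot_radical p q (envideal p q) z"
    have finz: "finite {w. z w \<noteq> 0}" using z by (rule freealg_fin)
    have M0: "act p z (dl b) a = 0" if ab: "a \<in> Om" "b \<in> Om" for a b
    proof (rule ccontr)
      assume lam: "act p z (dl b) a \<noteq> 0"
      define l where "l = act p z (dl b) a"
      define y where "y = Rep_W (sc (1 / l) * (e b a :: 'a W))"
      have y: "y \<in> freealg p q" unfolding y_def using inF_sc[OF inF_e] by (simp add: inF_def)
      then have finy: "finite {w. y w \<noteq> 0}" by (rule freealg_fin)
      from rad y obtain w where w: "w \<in> freealg p q"
        and r: "fsub (fadd (fmul z y) w) (fmul (fmul z y) w) \<in> envideal p q"
        unfolding in_quot_radical_def by blast
      have finw: "finite {u. w u \<noteq> 0}" using w by (rule freealg_fin)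
      have zy: "fmul z y \<in> freealg p q" using z y by (rule freealg_fmul)
      have finzy: "finite {u. fmul z y u \<noteq> 0}" using zy by (rule freealg_fin)
      have finzyw: "finite {u. fmul (fmul z y) w u \<noteq> 0}" by (rule freealg_fin[OF freealg_fmul[OF zy w]])
      have finsum: "finite {u. fadd (fmul z y) w u \<noteq> 0}" by (rule freealg_fin[OF freealg_fadd[OF zy w]])
      have acty: "act p y x c = (1 / l) * (if c = b then x a else 0)" for x c
      proof -
        have "act p y x c = (1 / l) * actW (e b a) x c"
          unfolding y_def actW_def Rep_sc_times by (rule act_fsmult) (simp add: inF_fin)
        moreover have "actW (e b a :: 'a W) x c = (if c = b then x a else 0)" by (rule actW_e[OF ab])
        ultimately show ?thesis by simp
      qed
      have key: "act p (fmul z y) x a = x a" for x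
      proof -
        have "act p (fmul z y) x a = act p z (act p y x) a" by (rule act_fmul[OF finz finy])
        also have "act p y x = (\<lambda>c. ((1 / l) * x a) * dl b c)"
          by (simp add: acty dl_def fun_eq_iff)
        also have "act p z (\<lambda>c. ((1 / l) * x a) * dl b c) a = ((1 / l) * x a) * act p z (dl b) a"
          by (rule act_smult_v)
        also have "\<dots> = x a" using lam by (simp add: l_def)
        finally show ?thesis .
      qed
      have "act p (fsub (fadd (fmul z y) w) (fmul (fmul z y) w)) (dl a) a = 0"
        using act_envideal[OF r[unfolded envideal_def]] by blast
      moreover have "act p (fsub (fadd (fmul z y) w) (fmul (fmul z y) w)) (dl a) a
          = act p (fmul z y) (dl a) a + act p w (dl a) a - act p (fmul z y) (act p w (dl a)) a"
        by (simp add: act_fsub act_fadd act_fmul finsum finzyw finzy finw)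
      ultimately have "dl a a + act p w (dl a) a - act p w (dl a) a = (0::'a)"
        by (simp add: key)
      then show False by (simp add: dl_def)
    qed
    have "Abs_W z \<approx> (\<Sum>a\<in>Om. \<Sum>b\<in>Om. sc (act p z (dl b) a) * (e a b :: 'a W))"
      by (rule span_all[OF z])
    also have "\<dots> = 0" by (simp add: M0 sc_zero)
    finally have "inI (Abs_W z)" by (simp add: cg_def)
    then show "z \<in> envideal p q" by (simp add: inI_def)
  qed
qed


end
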